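(* (a) For each $h$, the function $d_h(f,f')=\frac{\sqrt d\,\|c_h\|}{\|f^\star_h\|_h}\|f-f'\|_h$ on $\mathcal F\times\mathcal F$ is a well-defined pseudo-metric, and for every $\boldsymbol f\in\mathcal F^H$ with greedy policy $\pi$ and every $h=2,\dots,H$, $$\sup_{g\in\partial\mathcal F,\ \|g\|_h>0}\frac{\|(\mathcal P^\pi_{h-1}-\mathcal P^\star_{h-1})g\|_{h-1}}{\|g\|_h}\le d_h(f_h,f^\star_h).$$ (b) Let $\rho_1,\dots,\rho_H>0$ with $\rho_h\le\frac{1}{2(H-h+1)}$ for all $h$ and additionally $\rho_h\le\frac12(H-h+1)^{-1}(1+\log H)^{-1}$ for $h=2,\dots,H-1$, and let $\mathcal N=\{\boldsymbol f\in\mathcal F^H:d_h(f_h,f^\star_h)\le\rho_h\ \forall h\}$. Then there are constants $\kappa_1,\dots,\kappa_{H-1}$ such that $\|\mathcal T^\star_hf_{h+1}-\mathcal T^\star_hf^\star_{h+1}\|_h\le\kappa_h\|f_{h+1}-f^\star_{h+1}\|_{h+1}$ for all $\boldsymbol f\in\mathcal N$ and $h=1,\dots,H-1$, and $\kappa_h\kappa_{h+1}\cdots\kappa_{h'-1}\le3$ for all $h\le h'$. (c) For every $\boldsymbol f\in\mathcal F^H$ with greedy policy $\pi$ and all $1\le h\le h'\le H-1$, $$\sup_{g\in\partial\mathcal F,\ \|g\|_{h'}>0}\frac{\big|\mathbb E_{\pi^\star}\big[(\mathcal P^\star_{h\to h'}g)(S_h,\pi^\star_h(S_h))-(\mathcal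 P^\star_{h\to h'}g)(S_h,\pi_h(S_h))\big]\big|}{\|g\|_{h'}}\le\sqrt d\,\|c_h\|\,\frac{\|f_h-f^\star_h\|_h}{\|f^\star_h\|_h}.$$
   Context: Finite-horizon MDP: horizon $H\ge2$, state space $\mathcal S$, action space $\mathcal A$, kernels $P_h(\cdot\mid s,a)$ ($h<H$), known rewards $r_h$, initial distribution $\nu_1$; $J$, $\mathbb E_\pi$ as usual for the process $S_1\sim\nu_1$, $A_h\sim\pi_h(\cdot\mid S_h)$, $S_{h+1}\sim P_h(\cdot\mid S_h,A_h)$. $f(s,\pi_h(s)):=\int f(s,a)\pi_h(da\mid s)$; $(\mathcal P^\pi_hf)(s,a)=\int f(s',\pi_{h+1}(s'))P_h(ds'\mid s,a)$; $(\mathcal T^\star_hf)(s,a)=r_h(s,a)+\mathbb E[\max_{a'}f(S',a')]$, $S'\sim P_h(\cdot\mid s,a)$. $f^\star_H=r_H$, $f^\star_h=\mathcal T^\star_hf^\star_{h+1}$; $\pi^\star$ optimal and greedy w.r.t. $\boldsymbol f^\star$; $\mathcal P^\star_h=\mathcal P^{\pi^\star}_h$, $\mathcal P^\star_{h\to h'}=\mathcal P^\star_h\cdots\mathcal P^\star_{h'-1}$ ($h<h'$), identity for $h=h'$. Greedy policy of $\boldsymbol f$: $\pi_h(s)\in\arg\max_af_h(s,a)$, assumed unique and deterministic. Linear setting: feature map $\phi:\mathcal S\times\mathcal A\to\mathbb R^d$ with $\|\phi(s,a)\|_2\le1$; $\mathcal F=\{f_w=\langle\phi(\cdot),w\rangle:w\in\mathbb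 R^d\}$ (so $\partial\mathcal F=\mathcal F$), assumed to satisfy $\mathcal T^\pi_h\mathcal F\subseteq\mathcal F$ ($\mathcal T^\pi_hf=r_h+\mathcal P^\pi_hf$) for greedy policies $\pi$ of elements of $\mathcal F^H$, and $f^\star_h\in\mathcal F$. $\Sigma_h=\mathbb E_{\pi^\star}[\phi(S_h,A_h)\phi(S_h,A_h)^\top]$ is positive definite; $\|f\|_h=\sqrt{\mathbb E_{\pi^\star}[f(S_h,A_h)^2]}$, so $\|f_w\|_h=\|w\|_{\Sigma_h}=\sqrt{w^\top\Sigma_hw}$; $\|f^\star_h\|_h>0$. Curvature assumption: there are functions $c_h:\mathcal S\to[0,\infty)$ such that for every $h$, every $f_h\in\mathcal F$ with greedy $\pi_h$, and every $s$: (Curv1) $\|\phi(s,\pi_h(s))-\phi(s,\pi^\star_h(s))\|_{\Sigma_h^{-1}}\le c_h(s)\sqrt d\,\|f_h-f^\star_h\|_h/\|f^\star_h\|_h$; (Curv2) $f_h(s,\pi_h(s))-f_h(s,\pi^\star_h(s))\le c_h(s)\sqrt d\,\|f^\star_h\|_h\,(\|f_h-f^\star_h\|_h/\|f^\star_h\|_h)^2$. Here $\|c_h\|:=\sqrt{\mathbb E_{\nu_1,\pi^\star}[c_h(S_h)^2]}$. *)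

theory Defs
  imports "HOL-Analysis.Analysis" "HOL-Probability.Probability"
begin

definition fw :: "('s \<Rightarrow> 'a \<Rightarrow> real^'d) \<Rightarrow> real^'d \<Rightarrow> 's \<Rightarrow> 'a \<Rightarrow> real" where
  "fw \<phi> w = (\<lambda>s a. \<phi> s a \<bullet> w)"

definition greedy_at :: "'s measure \<Rightarrow> 'a measure \<Rightarrow> ('s \<Rightarrow> 'a \<Rightarrow> real) \<Rightarrow> ('s \<Rightarrow> 'a) \<Rightarrow> bool" where
  "greedy_at S A f p \<longleftrightarrow> p \<in> S \<rightarrow>\<^sub>M A \<and>
     (\<forall>s\<in>space S. p s \<in> space A \<and> (\<forall>a\<in>space A. f s a \<le> f s (p s)))"

definition Tstar :: "'a measure \<Rightarrow> (nat \<Rightarrow> 's \<Rightarrow> 'a \<Rightarrow> 's measure) \<Rightarrow> (nat \<Rightarrow> 's \<Rightarrow> 'a \<Rightarrow> real)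
     \<Rightarrow> nat \<Rightarrow> ('s \<Rightarrow> 'a \<Rightarrow> real) \<Rightarrow> 's \<Rightarrow> 'a \<Rightarrow> real" where
  "Tstar A P r h f = (\<lambda>s a. r h s a + (\<integral>s'. (SUP a'\<in>space A. f s' a') \<partial>(P h s a)))"

text \<open>fstar_aux k = f*_{H-k}\<close>
primrec fstar_aux :: "'a measure \<Rightarrow> (nat \<Rightarrow> 's \<Rightarrow> 'a \<Rightarrow> 's measure) \<Rightarrow> (nat \<Rightarrow> 's \<Rightarrow> 'a \<Rightarrow> real)
     \<Rightarrow> nat \<Rightarrow> nat \<Rightarrow> 's \<Rightarrow> 'a \<Rightarrow> real" where
  "fstar_aux A P r H 0 = r H"
| "fstar_aux A P r H (Suc k) = Tstar A P r (H - Suc k) (fstar_aux A P r H k)"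

text \<open>f*_h  (f*_H = r_H, f*_h = T*_h f*_{h+1}), for 1 <= h <= H\<close>
definition fstar :: "'a measure \<Rightarrow> (nat \<Rightarrow> 's \<Rightarrow> 'a \<Rightarrow> 's measure) \<Rightarrow> (nat \<Rightarrow> 's \<Rightarrow> 'a \<Rightarrow> real)
     \<Rightarrow> nat \<Rightarrow> nat \<Rightarrow> 's \<Rightarrow> 'a \<Rightarrow> real" where
  "fstar A P r H h = fstar_aux A P r H (H - h)"

text \<open>smu k = law of S_{k+1} under pi* (S_1 ~ nu_1, S_{h+1} ~ P_h(.|S_h, pi*_h(S_h)))\<close>
primrec smu :: "'s measure \<Rightarrow> (nat \<Rightarrow> 's \<Rightarrow> 'a \<Rightarrow> 's measure) \<Rightarrow> (nat \<Rightarrow> 's \<Rightarrow> 'a) \<Rightarrow> nat \<Rightarrow> 's measure" where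
  "smu \<nu> P \<pi> 0 = \<nu>"
| "smu \<nu> P \<pi> (Suc k) = bind (smu \<nu> P \<pi> k) (\<lambda>s. P (Suc k) s (\<pi> (Suc k) s))"

definition mu :: "'s measure \<Rightarrow> (nat \<Rightarrow> 's \<Rightarrow> 'a \<Rightarrow> 's measure) \<Rightarrow> (nat \<Rightarrow> 's \<Rightarrow> 'a) \<Rightarrow> nat \<Rightarrow> 's measure" where
  "mu \<nu> P \<pi> h = smu \<nu> P \<pi> (h - 1)"

definition hnorm :: "'s measure \<Rightarrow> (nat \<Rightarrow> 's \<Rightarrow> 'a \<Rightarrow> 's measure) \<Rightarrow> (nat \<Rightarrow> 's \<Rightarrow> 'a) \<Rightarrow> nat
     \<Rightarrow> ('s \<Rightarrow> 'a \<Rightarrow> real) \<Rightarrow> real" where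
  "hnorm \<nu> P \<pi> h f = sqrt (\<integral>s. (f s (\<pi> h s))\<^sup>2 \<partial>(mu \<nu> P \<pi> h))"

definition cnorm :: "'s measure \<Rightarrow> (nat \<Rightarrow> 's \<Rightarrow> 'a \<Rightarrow> 's measure) \<Rightarrow> (nat \<Rightarrow> 's \<Rightarrow> 'a) \<Rightarrow> nat
     \<Rightarrow> ('s \<Rightarrow> real) \<Rightarrow> real" where
  "cnorm \<nu> P \<pi> h c = sqrt (\<integral>s. (c s)\<^sup>2 \<partial>(mu \<nu> P \<pi> h))"

definition Sigma :: "'s measure \<Rightarrow> (nat \<Rightarrow> 's \<Rightarrow> 'a \<Rightarrow> 's measure) \<Rightarrow> (nat \<Rightarrow> 's \<Rightarrow> 'a)
     \<Rightarrow> ('s \<Rightarrow> 'a \<Rightarrow> real^'d) \<Rightarrow> nat \<Rightarrow> real^'d^'d" where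
  "Sigma \<nu> P \<pi> \<phi> h = (\<chi> i j. \<integral>s. (\<phi> s (\<pi> h s)) $ i * (\<phi> s (\<pi> h s)) $ j \<partial>(mu \<nu> P \<pi> h))"

definition qnorm :: "real^'d^'d \<Rightarrow> real^'d \<Rightarrow> real" where
  "qnorm M x = sqrt (x \<bullet> (M *v x))"

definition Ppol :: "(nat \<Rightarrow> 's \<Rightarrow> 'a \<Rightarrow> 's measure) \<Rightarrow> (nat \<Rightarrow> 's \<Rightarrow> 'a) \<Rightarrow> nat
     \<Rightarrow> ('s \<Rightarrow> 'a \<Rightarrow> real) \<Rightarrow> 's \<Rightarrow> 'a \<Rightarrow> real" where
  "Ppol P \<pi> h g = (\<lambda>s a. \<integral>s'. g s' (\<pi> (Suc h) s') \<partial>(P h s a))"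

text \<open>Pchain P pi h k = P^pi_h P^pi_{h+1} ... P^pi_{h+k-1}; so P*_{h->h'} = Pchain P pi* h (h'-h)\<close>
primrec Pchain :: "(nat \<Rightarrow> 's \<Rightarrow> 'a \<Rightarrow> 's measure) \<Rightarrow> (nat \<Rightarrow> 's \<Rightarrow> 'a) \<Rightarrow> nat \<Rightarrow> nat
     \<Rightarrow> ('s \<Rightarrow> 'a \<Rightarrow> real) \<Rightarrow> 's \<Rightarrow> 'a \<Rightarrow> real" where
  "Pchain P \<pi> h 0 g = g"
| "Pchain P \<pi> h (Suc k) g = Ppol P \<pi> h (Pchain P \<pi> (Suc h) k g)"

definition dh :: "'a measure \<Rightarrow> 's measure \<Rightarrow> (nat \<Rightarrow> 's \<Rightarrow> 'a \<Rightarrow> 's measure) \<Rightarrow> (nat \<Rightarrow> 's \<Rightarrow> 'a \<Rightarrow> real)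
     \<Rightarrow> nat \<Rightarrow> (nat \<Rightarrow> 's \<Rightarrow> 'a) \<Rightarrow> (nat \<Rightarrow> 's \<Rightarrow> real) \<Rightarrow> 'd itself \<Rightarrow> nat
     \<Rightarrow> ('s \<Rightarrow> 'a \<Rightarrow> real) \<Rightarrow> ('s \<Rightarrow> 'a \<Rightarrow> real) \<Rightarrow> real" where
  "dh A \<nu> P r H \<pi> c (_::'d itself) h f f' =
     sqrt (real CARD('d)) * cnorm \<nu> P \<pi> h (c h) / hnorm \<nu> P \<pi> h (fstar A P r H h)
       * hnorm \<nu> P \<pi> h (\<lambda>s a. f s a - f' s a)"

end

theory Submission
  imports Defs
begin

locale mdp =
  fixes S :: "'s measure" and A :: "'a measure"
    and P :: "nat \<Rightarrow> 's \<Rightarrow> 'a \<Rightarrow> 's measure"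
    and r :: "nat \<Rightarrow> 's \<Rightarrow> 'a \<Rightarrow> real"
    and \<nu> :: "'s measure" and H :: nat
    and \<phi> :: "'s \<Rightarrow> 'a \<Rightarrow> real^'d::finite"
    and \<pi>s :: "nat \<Rightarrow> 's \<Rightarrow> 'a"
    and c :: "nat \<Rightarrow> 's \<Rightarrow> real"
    and \<rho> :: "nat \<Rightarrow> real"
  assumes H2: "H \<ge> 2"
    and nu_prob: "prob_space \<nu>" and nu_sets: "sets \<nu> = sets S"
    and kernel: "\<forall>h\<in>{1..<H}. (\<forall>s\<in>space S. \<forall>a\<in>space A. prob_space (P h s a) \<and> sets (P h s a) = sets S)
                    \<and> (\<lambda>(s, a). P h s a) \<in> S \<Otimes>\<^sub>M A \<rightarrow>\<^sub>M subprob_algebra S"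
    and phi_meas: "(\<lambda>(s, a). \<phi> s a) \<in> borel_measurable (S \<Otimes>\<^sub>M A)"
    and phi_bound: "\<forall>s\<in>space S. \<forall>a\<in>space A. norm (\<phi> s a) \<le> 1"
    and greedy_exists: "\<forall>w. \<exists>p. greedy_at S A (fw \<phi> w) p"
    and pistar_greedy: "\<forall>h\<in>{1..H}. greedy_at S A (fstar A P r H h) (\<pi>s h)"
    and fstar_in_F: "\<forall>h\<in>{1..H}. \<exists>w. \<forall>s\<in>space S. \<forall>a\<in>space A. fstar A P r H h s a = fw \<phi> w s a"
    and closure: "\<forall>W \<pi>. (\<forall>h\<in>{1..H}. greedy_at S A (fw \<phi> (W h)) (\<pi> h)) \<longrightarrow>
                    (\<forall>h\<in>{1..<H}. \<forall>v. \<exists>v'. \<forall>s\<in>space S. \<forall>a\<in>space A.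
                        r h s a + Ppol P \<pi> h (fw \<phi> v) s a = fw \<phi> v' s a)"
    and Sigma_pd: "\<forall>h\<in>{1..H}. \<forall>x. x \<noteq> 0 \<longrightarrow> x \<bullet> (Sigma \<nu> P \<pi>s \<phi> h *v x) > 0"
    and fstar_pos: "\<forall>h\<in>{1..H}. hnorm \<nu> P \<pi>s h (fstar A P r H h) > 0"
    and c_reg: "\<forall>h\<in>{1..H}. c h \<in> borel_measurable S \<and> (\<forall>s\<in>space S. c h s \<ge> 0)
                   \<and> integrable (mu \<nu> P \<pi>s h) (\<lambda>s. (c h s)\<^sup>2)"
    and curv: "\<forall>h\<in>{1..H}. \<forall>v p. greedy_at S A (fw \<phi> v) p \<longrightarrow> (\<forall>s\<in>space S.
        qnorm (matrix_inv (Sigma \<nu> P \<pi>s \<phi> h)) (\<phi> s (p s) - \<phi> s (\<pi>s h s))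
          \<le> c h s * sqrt (real CARD('d)) * hnorm \<nu> P \<pi>s h (\<lambda>s a. fw \<phi> v s a - fstar A P r H h s a)
               / hnorm \<nu> P \<pi>s h (fstar A P r H h)
      \<and> fw \<phi> v s (p s) - fw \<phi> v s (\<pi>s h s)
          \<le> c h s * sqrt (real CARD('d)) * hnorm \<nu> P \<pi>s h (fstar A P r H h)
             * (hnorm \<nu> P \<pi>s h (\<lambda>s a. fw \<phi> v s a - fstar A P r H h s a)
                  / hnorm \<nu> P \<pi>s h (fstar A P r H h))\<^sup>2)"
begin

definition kern :: "nat \<Rightarrow> 's \<Rightarrow> 's measure" where
  "kern h = (\<lambda>s. P h s (\<pi>s h s))"

lemma pis_meas: "h \<in> {1..H} \<Longrightarrow> \<pi>s h \<in> S \<rightarrow>\<^sub>M A"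
  using pistar_greedy unfolding greedy_at_def by auto

lemma pis_space: "h \<in> {1..H} \<Longrightarrow> s \<in> space S \<Longrightarrow> \<pi>s h s \<in> space A"
  using pistar_greedy unfolding greedy_at_def by auto

lemma kern_meas: "h \<in> {1..<H} \<Longrightarrow> kern h \<in> S \<rightarrow>\<^sub>M subprob_algebra S"
proof -
  assume h: "h \<in> {1..<H}"
  have k: "(\<lambda>(s, a). P h s a) \<in> S \<Otimes>\<^sub>M A \<rightarrow>\<^sub>M subprob_algebra S" using kernel h by auto
  have p: "(\<lambda>s. (s, \<pi>s h s)) \<in> S \<rightarrow>\<^sub>M S \<Otimes>\<^sub>M A"
    using pis_meas[of h] h by (auto intro!: measurable_Pair)
  have "(\<lambda>(s, a). P h s a) \<circ> (\<lambda>s. (s, \<pi>s h s)) \<in> S \<rightarrow>\<^sub>M subprob_algebra S"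
    using measurable_comp[OF p k] .
  then show ?thesis unfolding kern_def comp_def by simp
qed

lemma kern_prob: "h \<in> {1..<H} \<Longrightarrow> s \<in> space S \<Longrightarrow> prob_space (kern h s) \<and> sets (kern h s) = sets S"
  unfolding kern_def using kernel pis_space[of h s] by auto

lemma smu_props: "k < H \<Longrightarrow> prob_space (smu \<nu> P \<pi>s k) \<and> sets (smu \<nu> P \<pi>s k) = sets S"
proof (induction k)
  case 0
  then show ?case using nu_prob nu_sets by simp
next
  case (Suc k)
  then have IH: "prob_space (smu \<nu> P \<pi>s k)" "sets (smu \<nu> P \<pi>s k) = sets S" by auto
  have sp: "space (smu \<nu> P \<pi>s k) = space S" using IH(2) sets_eq_imp_space_eq by blast
  have hk: "Suc k \<in> {1..<H}" using Suc by auto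
  have km: "kern (Suc k) \<in> smu \<nu> P \<pi>s k \<rightarrow>\<^sub>M subprob_algebra S"
    using kern_meas[OF hk] IH(2) measurable_cong_sets by blast
  have eq: "smu \<nu> P \<pi>s (Suc k) = bind (smu \<nu> P \<pi>s k) (kern (Suc k))"
    by (simp add: kern_def)
  have "prob_space (bind (smu \<nu> P \<pi>s k) (kern (Suc k)))"
    by (rule prob_space.prob_space_bind[OF IH(1) _ km])
       (rule AE_I2, use kern_prob[OF hk] sp in auto)
  moreover have "sets (bind (smu \<nu> P \<pi>s k) (kern (Suc k))) = sets S"
    by (rule sets_bind) (use kern_prob[OF hk] sp prob_space.not_empty[OF IH(1)] in auto)
  ultimately show ?case using eq by simp
qed

lemma mu_props: "h \<in> {1..H} \<Longrightarrow> prob_space (mu \<nu> P \<pi>s h) \<and> sets (mu \<nu> P \<pi>s h) = sets S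
   \<and> space (mu \<nu> P \<pi>s h) = space S"
proof -
  assume "h \<in> {1..H}"
  then have "prob_space (smu \<nu> P \<pi>s (h-1)) \<and> sets (smu \<nu> P \<pi>s (h-1)) = sets S"
    using smu_props[of "h - 1"] by auto
  then show ?thesis unfolding mu_def using sets_eq_imp_space_eq by metis
qed

lemma mu_Suc: "h \<in> {1..<H} \<Longrightarrow> mu \<nu> P \<pi>s (Suc h) = bind (mu \<nu> P \<pi>s h) (kern h)"
  unfolding mu_def kern_def by (cases h) auto

lemma kern_meas_mu: "h \<in> {1..<H} \<Longrightarrow> kern h \<in> mu \<nu> P \<pi>s h \<rightarrow>\<^sub>M subprob_algebra S"
  using kern_meas[of h] mu_props[of h] measurable_cong_sets by fastforce

end


lemma disc_le:
  fixes A C D :: real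
  assumes "\<And>t. 0 \<le> A + 2*t*C + t^2*D" "0 \<le> A" "0 \<le> D"
  shows "C^2 \<le> A*D"
proof (cases "D = 0")
  case True
  show ?thesis
  proof (rule ccontr)
    assume "\<not> ?thesis"
    then have "C \<noteq> 0" using True by simp
    have "0 \<le> A + 2*(-(A+1)/(2*C))*C + (-(A+1)/(2*C))^2*D" by (rule assms(1))
    moreover have "2*(-(A+1)/(2*C))*C = -(A+1)" using \<open>C \<noteq> 0\<close> by simp
    ultimately show False using True by simp
  qed
next
  case False
  then have Dp: "D > 0" using assms(3) by simp
  have "0 \<le> A + 2*(-C/D)*C + (-C/D)^2*D" by (rule assms(1))
  also have "\<dots> = A - C^2/D" using Dp by (simp add: field_simps power2_eq_square)
  finally show ?thesis using Dp by (simp add: field_simps)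
qed

lemma sqrt_mink:
  fixes A C D :: real
  assumes "C^2 \<le> A*D" "0 \<le> A" "0 \<le> D"
  shows "sqrt (A + 2*C + D) \<le> sqrt A + sqrt D"
proof -
  have "C \<le> sqrt A * sqrt D"
    using assms real_le_rsqrt[of C "A*D"] by (simp add: real_sqrt_mult)
  then have "A + 2*C + D \<le> (sqrt A + sqrt D)^2"
    using assms by (simp add: power2_sum)
  then show ?thesis
    using real_sqrt_le_mono[of "A + 2*C + D" "(sqrt A + sqrt D)^2"] assms by simp
qed

lemma abs_mul_bd:
  fixes a b C D :: real
  assumes "\<bar>a\<bar> \<le> C" "\<bar>b\<bar> \<le> D"
  shows "\<bar>a * b\<bar> \<le> C * D"
proof -
  have "\<bar>a\<bar> * \<bar>b\<bar> \<le> C * D"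
    by (rule mult_mono[OF assms(1,2)]) (use assms in auto)
  then show ?thesis by (simp add: abs_mult)
qed

lemma bm_int:
  fixes f :: "'x \<Rightarrow> real"
  assumes "finite_measure M" "f \<in> borel_measurable M" "\<And>x. x \<in> space M \<Longrightarrow> \<bar>f x\<bar> \<le> C"
  shows "integrable M f"
  using finite_measure.integrable_const_bound[OF assms(1), of f C] assms(2,3) by (auto intro!: AE_I2)

lemma jensen_sq:
  fixes f :: "'x \<Rightarrow> real"
  assumes "prob_space M" "f \<in> borel_measurable M" "\<And>x. x \<in> space M \<Longrightarrow> \<bar>f x\<bar> \<le> C"
  shows "(\<integral>x. f x \<partial>M)^2 \<le> (\<integral>x. (f x)^2 \<partial>M)"
proof -
  interpret prob_space M by fact
  have fm: "finite_measure M" by unfold_locales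
  have i1: "integrable M f" by (rule bm_int[OF fm assms(2,3)])
  have b: "\<bar>(f x)^2\<bar> \<le> C^2" if "x \<in> space M" for x
  proof -
    have "\<bar>f x\<bar>^2 \<le> C^2" by (rule power_mono[OF assms(3)[OF that]]) simp
    then show ?thesis by (simp add: power_abs)
  qed
  have i2: "integrable M (\<lambda>x. (f x)^2)" by (rule bm_int[OF fm _ b]) (use assms(2) in auto)
  show ?thesis using variance_eq[OF i1 i2] variance_positive[of f] by simp
qed

lemma int_CS:
  fixes f g :: "'x \<Rightarrow> real"
  assumes "finite_measure M" "f \<in> borel_measurable M" "\<And>x. x \<in> space M \<Longrightarrow> \<bar>f x\<bar> \<le> C"
     "g \<in> borel_measurable M" "\<And>x. x \<in> space M \<Longrightarrow> \<bar>g x\<bar> \<le> D"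
  shows "sqrt (\<integral>x. (f x + g x)^2 \<partial>M) \<le> sqrt (\<integral>x. (f x)^2 \<partial>M) + sqrt (\<integral>x. (g x)^2 \<partial>M)"
proof -
  have bd: "integrable M h" if "h \<in> borel_measurable M" "\<And>x. x \<in> space M \<Longrightarrow> \<bar>h x\<bar> \<le> B" for h :: "'x \<Rightarrow> real" and B
    using bm_int[OF assms(1) that] .
  have C0: "0 \<le> C" if "space M \<noteq> {}" using assms(3) that by force
  have iff: "integrable M (\<lambda>x. f x * f x)"
    by (rule bd[where B="C*C"]) (use assms(2) in simp, rule abs_mul_bd, auto simp: assms(3))
  have igg: "integrable M (\<lambda>x. g x * g x)"
    by (rule bd[where B="D*D"]) (use assms(4) in simp, rule abs_mul_bd, auto simp: assms(5))
  have ifg: "integrable M (\<lambda>x. f x * g x)"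
    by (rule bd[where B="C*D"]) (use assms(2,4) in simp, rule abs_mul_bd, auto simp: assms(3,5))
  define A' where "A' = (\<integral>x. f x * f x \<partial>M)"
  define C' where "C' = (\<integral>x. f x * g x \<partial>M)"
  define D' where "D' = (\<integral>x. g x * g x \<partial>M)"
  have expand: "(\<integral>x. (f x + t * g x)^2 \<partial>M) = A' + 2*t*C' + t^2*D'" for t
  proof -
    have "(\<lambda>x. (f x + t * g x)^2) = (\<lambda>x. f x * f x + (2*t) * (f x * g x) + t^2 * (g x * g x))"
      by (auto simp: power2_eq_square algebra_simps)
    then show ?thesis
      unfolding A'_def C'_def D'_def using iff igg ifg by simp
  qed
  have nn: "0 \<le> (\<integral>x. (f x + t * g x)^2 \<partial>M)" for t by simp
  have A0: "0 \<le> A'" unfolding A'_def by simp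
  have D0: "0 \<le> D'" unfolding D'_def by simp
  have "C'^2 \<le> A'*D'" using disc_le[of A' C' D'] nn expand A0 D0 by simp
  from sqrt_mink[OF this A0 D0] show ?thesis
    using expand[of 1] unfolding A'_def D'_def by (simp add: power2_eq_square)
qed


lemma kernel_jensen:
  fixes g B :: "'x \<Rightarrow> real"
  assumes Nm: "N \<in> M \<rightarrow>\<^sub>M subprob_algebra S"
    and Np: "\<And>s. s \<in> space M \<Longrightarrow> prob_space (N s) \<and> sets (N s) = sets S"
    and gm: "g \<in> borel_measurable S" and gb: "\<And>x. x \<in> space S \<Longrightarrow> \<bar>g x\<bar> \<le> C"
    and Bm: "B \<in> borel_measurable S" and gB: "\<And>x. x \<in> space S \<Longrightarrow> \<bar>g x\<bar> \<le> B x"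
    and Bi: "integrable (bind M N) (\<lambda>x. (B x)^2)"
  shows "(\<integral>s. (\<integral>x. g x \<partial>N s)^2 \<partial>M) \<le> (\<integral>x. (B x)^2 \<partial>(bind M N))"
proof (cases "integrable M (\<lambda>s. (\<integral>x. g x \<partial>N s)^2)")
  case False
  then show ?thesis by (simp add: not_integrable_integral_eq)
next
  case True
  have pw: "ennreal ((\<integral>x. g x \<partial>N s)^2) \<le> (\<integral>\<^sup>+x. ennreal ((B x)^2) \<partial>N s)" if s: "s \<in> space M" for s
  proof -
    have ps: "prob_space (N s)" and ss: "sets (N s) = sets S" using Np[OF s] by auto
    have sp: "space (N s) = space S" using ss sets_eq_imp_space_eq by blast
    have gm': "g \<in> borel_measurable (N s)" using gm ss measurable_cong_sets by blast
    have fm: "finite_measure (N s)" using ps by (simp add: prob_space.finite_measure)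
    have j: "(\<integral>x. g x \<partial>N s)^2 \<le> (\<integral>x. (g x)^2 \<partial>N s)"
      by (rule jensen_sq[OF ps gm']) (use gb sp in auto)
    have b2: "\<bar>(g x)^2\<bar> \<le> C^2" if "x \<in> space (N s)" for x
    proof -
      have "\<bar>g x\<bar>^2 \<le> C^2" by (rule power_mono) (use gb that sp in auto)
      then show ?thesis by (simp add: power_abs)
    qed
    have i2: "integrable (N s) (\<lambda>x. (g x)^2)"
      by (rule bm_int[OF fm _ b2]) (use gm' in auto)
    have "ennreal ((\<integral>x. g x \<partial>N s)^2) \<le> ennreal (\<integral>x. (g x)^2 \<partial>N s)"
      using j by (rule ennreal_leI)
    also have "\<dots> = (\<integral>\<^sup>+x. ennreal ((g x)^2) \<partial>N s)"
      by (rule nn_integral_eq_integral[symmetric]) (use i2 in auto)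
    also have "\<dots> \<le> (\<integral>\<^sup>+x. ennreal ((B x)^2) \<partial>N s)"
    proof (rule nn_integral_mono)
      fix x assume "x \<in> space (N s)"
      then have "\<bar>g x\<bar> \<le> B x" using gB sp by auto
      then have "(g x)^2 \<le> (B x)^2"
        by (metis abs_ge_zero order_trans power2_abs power_mono)
      then show "ennreal ((g x)^2) \<le> ennreal ((B x)^2)" by (rule ennreal_leI)
    qed
    finally show ?thesis .
  qed
  have "ennreal (\<integral>s. (\<integral>x. g x \<partial>N s)^2 \<partial>M) = (\<integral>\<^sup>+s. ennreal ((\<integral>x. g x \<partial>N s)^2) \<partial>M)"
    by (rule nn_integral_eq_integral[symmetric]) (use True in auto)
  also have "\<dots> \<le> (\<integral>\<^sup>+s. (\<integral>\<^sup>+x. ennreal ((B x)^2) \<partial>N s) \<partial>M)"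
    by (rule nn_integral_mono) (rule pw)
  also have "\<dots> = (\<integral>\<^sup>+x. ennreal ((B x)^2) \<partial>(bind M N))"
    by (rule nn_integral_bind[symmetric, OF _ Nm]) (use Bm in measurable)
  also have "\<dots> = ennreal (\<integral>x. (B x)^2 \<partial>(bind M N))"
    by (rule nn_integral_eq_integral) (use Bi in auto)
  finally show ?thesis by (rule ennreal_le_iff[THEN iffD1, rotated]) simp
qed


lemma abs_le_sqrt_prod:
  fixes A C D :: real
  assumes "C^2 \<le> A*D" "0 \<le> A" "0 \<le> D"
  shows "\<bar>C\<bar> \<le> sqrt A * sqrt D"
proof -
  have "sqrt (C^2) \<le> sqrt (A*D)" using assms(1) by (rule real_sqrt_le_mono)
  then show ?thesis by (simp add: real_sqrt_mult)
qed

lemma qform_CS: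
  fixes Sg :: "real^'d^'d" and x v :: "real^'d"
  assumes sym: "transpose Sg = Sg" and pd: "\<forall>x. x \<noteq> 0 \<longrightarrow> x \<bullet> (Sg *v x) > 0"
  shows "\<bar>x \<bullet> v\<bar> \<le> qnorm (matrix_inv Sg) x * qnorm Sg v"
proof -
  have symQ: "a \<bullet> (Sg *v b) = b \<bullet> (Sg *v a)" for a b
  proof -
    have "a \<bullet> (Sg *v b) = (a v* Sg) \<bullet> b" by (simp add: dot_lmul_matrix)
    also have "a v* Sg = Sg *v a" using transpose_matrix_vector[of Sg a] sym by simp
    finally show ?thesis by (simp add: inner_commute)
  qed
  have psd: "0 \<le> a \<bullet> (Sg *v a)" for a
    using pd by (cases "a = 0") (auto intro: less_imp_le)
  have ker: "\<forall>x. Sg *v x = 0 \<longrightarrow> x = 0"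
    using pd by force
  then have "\<exists>B. B ** Sg = mat 1" using matrix_left_invertible_ker by blast
  then have inv: "invertible Sg" using invertible_left_inverse by blast
  then have "\<exists>A'. Sg ** A' = mat 1 \<and> A' ** Sg = mat 1" unfolding invertible_def .
  then have "Sg ** matrix_inv Sg = mat 1 \<and> matrix_inv Sg ** Sg = mat 1"
    unfolding matrix_inv_def by (rule someI_ex)
  then have right: "Sg ** matrix_inv Sg = mat 1" by simp
  define y where "y = matrix_inv Sg *v x"
  have xy: "Sg *v y = x" unfolding y_def
    by (simp add: matrix_vector_mul_assoc right)
  have expand: "(y + t *\<^sub>R v) \<bullet> (Sg *v (y + t *\<^sub>R v))
      = y \<bullet> (Sg *v y) + 2*t*(y \<bullet> (Sg *v v)) + t^2*(v \<bullet> (Sg *v v))" for t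
  proof -
    have "(y + t *\<^sub>R v) \<bullet> (Sg *v (y + t *\<^sub>R v))
       = y \<bullet> (Sg *v y) + t*(y \<bullet> (Sg *v v)) + t*(v \<bullet> (Sg *v y)) + t^2*(v \<bullet> (Sg *v v))"
      by (simp add: matrix_vector_right_distrib matrix_vector_mult_scaleR inner_add_left inner_add_right
          algebra_simps power2_eq_square)
    then show ?thesis using symQ[of v y] by simp
  qed
  have cs: "(y \<bullet> (Sg *v v))^2 \<le> (y \<bullet> (Sg *v y)) * (v \<bullet> (Sg *v v))"
    by (rule disc_le) (use expand psd in \<open>metis\<close>, use psd in auto)
  have e1: "x \<bullet> v = y \<bullet> (Sg *v v)"
    using symQ[of v y] xy by (simp add: inner_commute)
  have e2: "x \<bullet> (matrix_inv Sg *v x) = y \<bullet> (Sg *v y)"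
    using xy unfolding y_def[symmetric] by (simp add: inner_commute)
  show ?thesis
    unfolding qnorm_def e1 e2 by (rule abs_le_sqrt_prod[OF cs psd psd])
qed


lemma harm_ln: "1 \<le> k \<Longrightarrow> (\<Sum>m\<in>{2..k}. 1 / real m) \<le> ln (real k)"
proof (induction k)
  case 0 then show ?case by simp
next
  case (Suc k)
  show ?case
  proof (cases "k = 0")
    case True then show ?thesis by simp
  next
    case False
    then have k1: "1 \<le> k" by simp
    have IH: "(\<Sum>m\<in>{2..k}. 1 / real m) \<le> ln (real k)" using Suc.IH k1 by simp
    have split: "(\<Sum>m\<in>{2..Suc k}. 1 / real m) = (\<Sum>m\<in>{2..k}. 1 / real m) + 1 / real (Suc k)"
      using k1 by (simp add: sum.atLeast_Suc_atMost_Suc_shift)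
    have kp: "0 < real k" using k1 by simp
    have "ln (real k / real (Suc k)) \<le> real k / real (Suc k) - 1"
      by (rule ln_le_minus_one) (use kp in simp)
    moreover have "ln (real k / real (Suc k)) = ln (real k) - ln (real (Suc k))"
      using kp by (simp add: ln_div)
    moreover have "real k / real (Suc k) - 1 = - (1 / real (Suc k))"
      by (simp add: field_simps)
    ultimately have "1 / real (Suc k) \<le> ln (real (Suc k)) - ln (real k)" by linarith
    then show ?thesis using split IH by linarith
  qed
qed

lemma harm_rev: "2 \<le> H \<Longrightarrow> (\<Sum>i\<in>{1..<H-1}. 1 / (real H - real i)) \<le> ln (real H)"
proof -
  assume H: "2 \<le> H"
  have "(\<Sum>i\<in>{1..<H-1}. 1 / (real H - real i)) = (\<Sum>m\<in>{2..H-1}. 1 / real m)"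
    by (rule sum.reindex_bij_witness[where i="\<lambda>m. H - m" and j="\<lambda>i. H - i"]) (use H in \<open>auto simp: of_nat_diff\<close>)
  also have "\<dots> \<le> ln (real (H - 1))" by (rule harm_ln) (use H in simp)
  also have "\<dots> \<le> ln (real H)" using H by simp
  finally show ?thesis .
qed

lemma prod_bound:
  fixes \<rho> :: "nat \<Rightarrow> real" and H :: nat
  assumes H2: "H \<ge> 2"
    and r1: "\<forall>h\<in>{1..H}. 0 < \<rho> h \<and> \<rho> h \<le> 1 / (2 * (real H - real h + 1))"
    and r2: "\<forall>h\<in>{2..H-1}. \<rho> h \<le> (1/2) * (1 / (real H - real h + 1)) * (1 / (1 + ln (real H)))"
    and hh: "1 \<le> h" "h \<le> h'" "h' \<le> H"
  shows "(\<Prod>i\<in>{h..<h'}. 1 + \<rho> (i + 1)) \<le> 3"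
proof -
  have nn: "0 \<le> \<rho> (i + 1)" if "i \<in> {1..<H}" for i
  proof -
    have "i + 1 \<in> {1..H}" using that by auto
    then show ?thesis using r1 less_imp_le by blast
  qed
  have "(\<Prod>i\<in>{h..<h'}. 1 + \<rho> (i + 1)) \<le> (\<Prod>i\<in>{h..<h'}. exp (\<rho> (i + 1)))"
    by (rule prod_mono) (use nn hh in \<open>auto intro!: add_increasing simp: exp_ge_add_one_self\<close>)
  also have "\<dots> = exp (\<Sum>i\<in>{h..<h'}. \<rho> (i + 1))" by (simp add: exp_sum)
  also have "(\<Sum>i\<in>{h..<h'}. \<rho> (i + 1)) \<le> (\<Sum>i\<in>{1..<H}. \<rho> (i + 1))"
    by (rule sum_mono2) (use nn hh in auto)
  also have "(\<Sum>i\<in>{1..<H}. \<rho> (i + 1)) = (\<Sum>i\<in>{1..<H-1}. \<rho> (i + 1)) + \<rho> H"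
  proof -
    have "{1..<H} = insert (H-1) {1..<H-1}" using H2 by auto
    then show ?thesis using H2 by simp
  qed
  also have "(\<Sum>i\<in>{1..<H-1}. \<rho> (i + 1)) \<le> (\<Sum>i\<in>{1..<H-1}. (1/2) * (1 / (1 + ln (real H))) * (1 / (real H - real i)))"
  proof (rule sum_mono)
    fix i assume i: "i \<in> {1..<H-1}"
    then have "i + 1 \<in> {2..H-1}" by auto
    then have "\<rho> (i+1) \<le> (1/2) * (1 / (real H - real (i+1) + 1)) * (1 / (1 + ln (real H)))" using r2 by blast
    moreover have "(1/2) * (1 / (real H - real (i+1) + 1)) * (1 / (1 + ln (real H)))
       = (1/2) * (1 / (1 + ln (real H))) * (1 / (real H - real i))" by (simp add: algebra_simps)
    ultimately show "\<rho> (i + 1) \<le> (1/2) * (1 / (1 + ln (real H))) * (1 / (real H - real i))" by linarith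
  qed
  also have "\<dots> = (1/2) * (1 / (1 + ln (real H))) * (\<Sum>i\<in>{1..<H-1}. 1 / (real H - real i))"
    by (simp add: sum_distrib_left)
  also have "\<dots> \<le> (1/2) * (1 / (1 + ln (real H))) * ln (real H)"
    by (rule mult_left_mono[OF harm_rev[OF H2]]) (use H2 in simp)
  also have "\<rho> H \<le> 1/2"
  proof -
    have "H \<in> {1..H}" using H2 by auto
    then have "\<rho> H \<le> 1 / (2 * (real H - real H + 1))" using r1 by blast
    then show ?thesis by simp
  qed
  finally have "(\<Prod>i\<in>{h..<h'}. 1 + \<rho> (i + 1)) \<le> exp ((1/2) * (1 / (1 + ln (real H))) * ln (real H) + 1/2)"
    by simp
  also have "\<dots> \<le> exp 1"
  proof -
    have lnp: "0 \<le> ln (real H)" using H2 by simp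
    have "(1 / (1 + ln (real H))) * ln (real H) \<le> 1" using lnp by (simp add: field_simps)
    then have "(1/2) * (1 / (1 + ln (real H))) * ln (real H) + 1/2 \<le> 1" by linarith
    then show ?thesis by (simp only: exp_le_cancel_iff)
  qed
  also have "\<dots> \<le> 3" by (rule exp_le)
  finally show ?thesis .
qed


context mdp begin

lemma phi_comp_meas[measurable]: "p \<in> S \<rightarrow>\<^sub>M A \<Longrightarrow> (\<lambda>s. \<phi> s (p s)) \<in> borel_measurable S"
proof -
  assume p: "p \<in> S \<rightarrow>\<^sub>M A"
  have q: "(\<lambda>s. (s, p s)) \<in> S \<rightarrow>\<^sub>M S \<Otimes>\<^sub>M A" using p by (auto intro!: measurable_Pair)
  have "(\<lambda>(s, a). \<phi> s a) \<circ> (\<lambda>s. (s, p s)) \<in> borel_measurable S" using measurable_comp[OF q phi_meas] .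
  then show ?thesis by (simp add: comp_def)
qed

lemma fw_comp_meas[measurable]: "p \<in> S \<rightarrow>\<^sub>M A \<Longrightarrow> (\<lambda>s. fw \<phi> v s (p s)) \<in> borel_measurable S"
  unfolding fw_def by (rule borel_measurable_inner[OF phi_comp_meas]) auto

lemma phi_comp_nth_meas: "p \<in> S \<rightarrow>\<^sub>M A \<Longrightarrow> (\<lambda>s. \<phi> s (p s) $ i) \<in> borel_measurable S"
proof -
  assume p: "p \<in> S \<rightarrow>\<^sub>M A"
  have "(\<lambda>s. \<phi> s (p s) \<bullet> axis i 1) \<in> borel_measurable S"
    by (rule borel_measurable_inner[OF phi_comp_meas[OF p]]) auto
  then show ?thesis by (simp add: inner_axis)
qed

lemma fw_bound: "s \<in> space S \<Longrightarrow> a \<in> space A \<Longrightarrow> \<bar>fw \<phi> v s a\<bar> \<le> norm v"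
proof -
  assume s: "s \<in> space S" and a: "a \<in> space A"
  have "\<bar>fw \<phi> v s a\<bar> \<le> norm (\<phi> s a) * norm v" unfolding fw_def by (rule Cauchy_Schwarz_ineq2)
  also have "\<dots> \<le> 1 * norm v" by (rule mult_right_mono) (use phi_bound s a in auto)
  finally show ?thesis by simp
qed

lemma phi_nth_bound: "s \<in> space S \<Longrightarrow> a \<in> space A \<Longrightarrow> \<bar>\<phi> s a $ i\<bar> \<le> 1"
  using component_le_norm_cart[of "\<phi> s a" i] phi_bound by force

lemma fw_diff: "fw \<phi> v s a - fw \<phi> v' s a = fw \<phi> (v - v') s a"
  unfolding fw_def by (simp add: inner_diff_right)

lemma fw_diff_fun: "(\<lambda>s a. fw \<phi> v s a - fw \<phi> v' s a) = fw \<phi> (v - v')"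
  using fw_diff by (intro ext) simp

lemma Sigma_sym: "transpose (Sigma \<nu> P \<pi>s \<phi> h) = Sigma \<nu> P \<pi>s \<phi> h"
  unfolding Sigma_def transpose_def by (simp add: vec_eq_iff mult.commute)

lemma quad_Sigma:
  assumes h: "h \<in> {1..H}"
  shows "u \<bullet> (Sigma \<nu> P \<pi>s \<phi> h *v u) = (\<integral>s. (fw \<phi> u s (\<pi>s h s))^2 \<partial>mu \<nu> P \<pi>s h)"
proof -
  define M where "M = mu \<nu> P \<pi>s h"
  have Mp: "prob_space M" "sets M = sets S" "space M = space S" using mu_props[OF h] unfolding M_def by auto
  have fm: "finite_measure M" using Mp(1) by (simp add: prob_space.finite_measure)
  have pm: "\<pi>s h \<in> S \<rightarrow>\<^sub>M A" by (rule pis_meas[OF h])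
  have mi: "(\<lambda>s. \<phi> s (\<pi>s h s) $ i) \<in> borel_measurable M" for i
    using phi_comp_nth_meas[OF pm] Mp(2) measurable_cong_sets by blast
  have ij: "integrable M (\<lambda>s. \<phi> s (\<pi>s h s) $ i * \<phi> s (\<pi>s h s) $ j)" for i j
  proof (rule bm_int[OF fm, where C="1*1"])
    show "(\<lambda>s. \<phi> s (\<pi>s h s) $ i * \<phi> s (\<pi>s h s) $ j) \<in> borel_measurable M" using mi by measurable
    fix s assume "s \<in> space M"
    then have s: "s \<in> space S" using Mp by simp
    show "\<bar>\<phi> s (\<pi>s h s) $ i * \<phi> s (\<pi>s h s) $ j\<bar> \<le> 1*1"
      by (rule abs_mul_bd) (use phi_nth_bound pis_space[OF h s] s in auto)
  qed
  have "(\<lambda>s. (fw \<phi> u s (\<pi>s h s))^2) =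
     (\<lambda>s. \<Sum>i\<in>UNIV. \<Sum>j\<in>UNIV. u$i * u$j * (\<phi> s (\<pi>s h s) $ i * \<phi> s (\<pi>s h s) $ j))"
    by (auto simp: fw_def inner_vec_def power2_eq_square sum_product algebra_simps intro!: sum.cong)
  then have "(\<integral>s. (fw \<phi> u s (\<pi>s h s))^2 \<partial>M) =
     (\<Sum>i\<in>UNIV. \<Sum>j\<in>UNIV. u$i * u$j * (\<integral>s. \<phi> s (\<pi>s h s) $ i * \<phi> s (\<pi>s h s) $ j \<partial>M))"
    using ij by simp
  also have "\<dots> = u \<bullet> (Sigma \<nu> P \<pi>s \<phi> h *v u)"
    unfolding Sigma_def M_def
    by (simp add: inner_vec_def matrix_vector_mult_def sum_distrib_left algebra_simps)
  finally show ?thesis unfolding M_def by simp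
qed

lemma hnorm_fw: "h \<in> {1..H} \<Longrightarrow> hnorm \<nu> P \<pi>s h (fw \<phi> u) = qnorm (Sigma \<nu> P \<pi>s \<phi> h) u"
  unfolding hnorm_def qnorm_def using quad_Sigma by simp

end


context mdp begin

definition ws :: "nat \<Rightarrow> real^'d" where
  "ws h = (SOME w. \<forall>s\<in>space S. \<forall>a\<in>space A. fstar A P r H h s a = fw \<phi> w s a)"

lemma fstar_eq: "h \<in> {1..H} \<Longrightarrow> s \<in> space S \<Longrightarrow> a \<in> space A \<Longrightarrow> fstar A P r H h s a = fw \<phi> (ws h) s a"
proof -
  assume h: "h \<in> {1..H}" and sa: "s \<in> space S" "a \<in> space A"
  have "\<exists>w. \<forall>s\<in>space S. \<forall>a\<in>space A. fstar A P r H h s a = fw \<phi> w s a" using fstar_in_F h by blast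
  then have "\<forall>s\<in>space S. \<forall>a\<in>space A. fstar A P r H h s a = fw \<phi> (ws h) s a"
    unfolding ws_def by (rule someI_ex)
  then show ?thesis using sa by blast
qed

lemma greedy_meas: "greedy_at S A f p \<Longrightarrow> p \<in> S \<rightarrow>\<^sub>M A"
  unfolding greedy_at_def by auto
lemma greedy_space: "greedy_at S A f p \<Longrightarrow> s \<in> space S \<Longrightarrow> p s \<in> space A"
  unfolding greedy_at_def by auto
lemma greedy_max: "greedy_at S A f p \<Longrightarrow> s \<in> space S \<Longrightarrow> a \<in> space A \<Longrightarrow> f s a \<le> f s (p s)"
  unfolding greedy_at_def by auto

lemma pis_greedy_ws: "h \<in> {1..H} \<Longrightarrow> greedy_at S A (fw \<phi> (ws h)) (\<pi>s h)"
proof -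
  assume h: "h \<in> {1..H}"
  have g: "greedy_at S A (fstar A P r H h) (\<pi>s h)" using pistar_greedy h by blast
  show ?thesis unfolding greedy_at_def
  proof (intro conjI ballI)
    show "\<pi>s h \<in> S \<rightarrow>\<^sub>M A" by (rule greedy_meas[OF g])
    fix s assume s: "s \<in> space S"
    show "\<pi>s h s \<in> space A" by (rule greedy_space[OF g s])
    fix a assume a: "a \<in> space A"
    have "fstar A P r H h s a \<le> fstar A P r H h s (\<pi>s h s)" by (rule greedy_max[OF g s a])
    then show "fw \<phi> (ws h) s a \<le> fw \<phi> (ws h) s (\<pi>s h s)"
      using fstar_eq[OF h s a] fstar_eq[OF h s greedy_space[OF g s]] by simp
  qed
qed

lemma hnorm_cong:
  assumes h: "h \<in> {1..H}" and eq: "\<And>s. s \<in> space S \<Longrightarrow> F s (\<pi>s h s) = G s (\<pi>s h s)"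
  shows "hnorm \<nu> P \<pi>s h F = hnorm \<nu> P \<pi>s h G"
proof -
  have "space (mu \<nu> P \<pi>s h) = space S" using mu_props[OF h] by simp
  then have "(\<integral>s. (F s (\<pi>s h s))^2 \<partial>mu \<nu> P \<pi>s h) = (\<integral>s. (G s (\<pi>s h s))^2 \<partial>mu \<nu> P \<pi>s h)"
    using eq by (intro Bochner_Integration.integral_cong refl) simp
  then show ?thesis unfolding hnorm_def by simp
qed

lemma hnorm_nonneg: "0 \<le> hnorm \<nu> P \<pi>s h F"
  unfolding hnorm_def by simp

lemma cnorm_nonneg: "0 \<le> cnorm \<nu> P \<pi>s h F"
  unfolding cnorm_def by simp

lemma kern_space: "h \<in> {1..<H} \<Longrightarrow> s \<in> space S \<Longrightarrow> space (kern h s) = space S"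
  using kern_prob sets_eq_imp_space_eq by metis

lemma P_props: "h \<in> {1..<H} \<Longrightarrow> s \<in> space S \<Longrightarrow> a \<in> space A \<Longrightarrow> prob_space (P h s a) \<and> sets (P h s a) = sets S"
proof -
  assume h: "h \<in> {1..<H}" and s: "s \<in> space S" and a: "a \<in> space A"
  have "\<forall>s\<in>space S. \<forall>a\<in>space A. prob_space (P h s a) \<and> sets (P h s a) = sets S"
    using bspec[OF kernel h] by (rule conjunct1)
  then show ?thesis using s a by blast
qed

lemma P_space: "h \<in> {1..<H} \<Longrightarrow> s \<in> space S \<Longrightarrow> a \<in> space A \<Longrightarrow> space (P h s a) = space S"
  using P_props sets_eq_imp_space_eq by metis

lemma Ppol_cong:
  assumes h: "h \<in> {1..<H}" and sa: "s \<in> space S" "a \<in> space A"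
    and eq: "\<And>s'. s' \<in> space S \<Longrightarrow> F s' (\<pi> (Suc h) s') = G s' (\<pi> (Suc h) s')"
  shows "Ppol P \<pi> h F s a = Ppol P \<pi> h G s a"
  unfolding Ppol_def using P_space[OF h sa] eq by (intro Bochner_Integration.integral_cong refl) simp

lemma Ppol_zero: "Ppol P \<pi> h (fw \<phi> 0) s a = 0"
  unfolding Ppol_def fw_def by simp

lemma Ppol_F:
  assumes h: "h \<in> {1..<H}"
  shows "\<exists>u'. \<forall>s\<in>space S. \<forall>a\<in>space A. Ppol P \<pi>s h (fw \<phi> u) s a = fw \<phi> u' s a"
proof -
  have g: "\<forall>h\<in>{1..H}. greedy_at S A (fw \<phi> (ws h)) (\<pi>s h)" using pis_greedy_ws by blast
  have cl: "\<forall>v. \<exists>v'. \<forall>s\<in>space S. \<forall>a\<in>space A. r h s a + Ppol P \<pi>s h (fw \<phi> v) s a = fw \<phi> v' s a"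
    using bspec[OF mp[OF spec[OF spec[OF closure, of ws], of \<pi>s] g] h] .
  obtain v1 where v1: "\<forall>s\<in>space S. \<forall>a\<in>space A. r h s a + Ppol P \<pi>s h (fw \<phi> u) s a = fw \<phi> v1 s a"
    using cl by blast
  obtain v0 where v0: "\<forall>s\<in>space S. \<forall>a\<in>space A. r h s a + Ppol P \<pi>s h (fw \<phi> 0) s a = fw \<phi> v0 s a"
    using cl by blast
  have "\<forall>s\<in>space S. \<forall>a\<in>space A. Ppol P \<pi>s h (fw \<phi> u) s a = fw \<phi> (v1 - v0) s a"
  proof (intro ballI)
    fix s a assume sa: "s \<in> space S" "a \<in> space A"
    have e1: "r h s a + Ppol P \<pi>s h (fw \<phi> u) s a = fw \<phi> v1 s a" using v1 sa by blast
    have e0: "r h s a = fw \<phi> v0 s a" using v0 sa Ppol_zero by force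
    show "Ppol P \<pi>s h (fw \<phi> u) s a = fw \<phi> (v1 - v0) s a"
      using e1 e0 fw_diff[of v1 s a v0] by linarith
  qed
  then show ?thesis by blast
qed

lemma chain_F:
  "1 \<le> h \<Longrightarrow> h + k \<le> H \<Longrightarrow> \<exists>u. \<forall>s\<in>space S. \<forall>a\<in>space A. Pchain P \<pi>s h k (fw \<phi> v) s a = fw \<phi> u s a"
proof (induction k arbitrary: h)
  case 0 then show ?case by auto
next
  case (Suc k)
  obtain u1 where u1: "\<forall>s\<in>space S. \<forall>a\<in>space A. Pchain P \<pi>s (Suc h) k (fw \<phi> v) s a = fw \<phi> u1 s a"
    using Suc.IH[of "Suc h"] Suc.prems by auto
  have h: "h \<in> {1..<H}" using Suc.prems by auto
  obtain u2 where u2: "\<forall>s\<in>space S. \<forall>a\<in>space A. Ppol P \<pi>s h (fw \<phi> u1) s a = fw \<phi> u2 s a"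
    using Ppol_F[OF h] by blast
  have "Pchain P \<pi>s h (Suc k) (fw \<phi> v) s a = fw \<phi> u2 s a" if "s \<in> space S" "a \<in> space A" for s a
  proof -
    have "Pchain P \<pi>s h (Suc k) (fw \<phi> v) s a = Ppol P \<pi>s h (Pchain P \<pi>s (Suc h) k (fw \<phi> v)) s a" by simp
    also have "\<dots> = Ppol P \<pi>s h (fw \<phi> u1) s a"
    proof (rule Ppol_cong[OF h that])
      fix s' assume s': "s' \<in> space S"
      have "Suc h \<in> {1..H}" using Suc.prems by auto
      then have "\<pi>s (Suc h) s' \<in> space A" using pis_space s' by blast
      then show "Pchain P \<pi>s (Suc h) k (fw \<phi> v) s' (\<pi>s (Suc h) s') = fw \<phi> u1 s' (\<pi>s (Suc h) s')"
        using u1 s' by blast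
    qed
    finally show ?thesis using u2 that by simp
  qed
  then show ?case by blast
qed

lemma curv_at:
  assumes h: "h \<in> {1..H}" and g: "greedy_at S A (fw \<phi> v) p" and s: "s \<in> space S"
  shows "qnorm (matrix_inv (Sigma \<nu> P \<pi>s \<phi> h)) (\<phi> s (p s) - \<phi> s (\<pi>s h s))
          \<le> c h s * sqrt (real CARD('d)) * hnorm \<nu> P \<pi>s h (\<lambda>s a. fw \<phi> v s a - fstar A P r H h s a)
               / hnorm \<nu> P \<pi>s h (fstar A P r H h)
      \<and> fw \<phi> v s (p s) - fw \<phi> v s (\<pi>s h s)
          \<le> c h s * sqrt (real CARD('d)) * hnorm \<nu> P \<pi>s h (fstar A P r H h)
             * (hnorm \<nu> P \<pi>s h (\<lambda>s a. fw \<phi> v s a - fstar A P r H h s a)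
                  / hnorm \<nu> P \<pi>s h (fstar A P r H h))\<^sup>2"
  using bspec[OF mp[OF spec[OF spec[OF bspec[OF curv h], of v], of p] g] s] .

lemma pw_bound:
  assumes h: "h \<in> {1..H}" and g: "greedy_at S A (fw \<phi> v) p" and s: "s \<in> space S"
  shows "\<bar>fw \<phi> u s (p s) - fw \<phi> u s (\<pi>s h s)\<bar>
     \<le> c h s * sqrt (real CARD('d)) * hnorm \<nu> P \<pi>s h (\<lambda>s a. fw \<phi> v s a - fstar A P r H h s a)
          / hnorm \<nu> P \<pi>s h (fstar A P r H h) * qnorm (Sigma \<nu> P \<pi>s \<phi> h) u"
proof -
  have pd: "\<forall>x. x \<noteq> 0 \<longrightarrow> x \<bullet> (Sigma \<nu> P \<pi>s \<phi> h *v x) > 0" using Sigma_pd h by blast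
  have "fw \<phi> u s (p s) - fw \<phi> u s (\<pi>s h s) = (\<phi> s (p s) - \<phi> s (\<pi>s h s)) \<bullet> u"
    unfolding fw_def by (simp add: inner_diff_left)
  then have "\<bar>fw \<phi> u s (p s) - fw \<phi> u s (\<pi>s h s)\<bar>
      \<le> qnorm (matrix_inv (Sigma \<nu> P \<pi>s \<phi> h)) (\<phi> s (p s) - \<phi> s (\<pi>s h s)) * qnorm (Sigma \<nu> P \<pi>s \<phi> h) u"
    using qform_CS[OF Sigma_sym pd, of "\<phi> s (p s) - \<phi> s (\<pi>s h s)" u] by simp
  also have "\<dots> \<le> c h s * sqrt (real CARD('d)) * hnorm \<nu> P \<pi>s h (\<lambda>s a. fw \<phi> v s a - fstar A P r H h s a)
          / hnorm \<nu> P \<pi>s h (fstar A P r H h) * qnorm (Sigma \<nu> P \<pi>s \<phi> h) u"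
  proof (rule mult_right_mono)
    show "qnorm (matrix_inv (Sigma \<nu> P \<pi>s \<phi> h)) (\<phi> s (p s) - \<phi> s (\<pi>s h s))
       \<le> c h s * sqrt (real CARD('d)) * hnorm \<nu> P \<pi>s h (\<lambda>s a. fw \<phi> v s a - fstar A P r H h s a)
          / hnorm \<nu> P \<pi>s h (fstar A P r H h)"
      using curv_at[OF h g s] by (rule conjunct1)
    have "0 \<le> u \<bullet> (Sigma \<nu> P \<pi>s \<phi> h *v u)" using pd by (cases "u = 0") (auto intro: less_imp_le)
    then show "0 \<le> qnorm (Sigma \<nu> P \<pi>s \<phi> h) u" unfolding qnorm_def by simp
  qed
  finally show ?thesis .
qed

end


lemma L1_bound:
  fixes F c :: "'x \<Rightarrow> real"
  assumes M: "prob_space M" and Fm: "F \<in> borel_measurable M" and Fb: "\<And>x. x \<in> space M \<Longrightarrow> \<bar>F x\<bar> \<le> C"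
    and ci: "integrable M (\<lambda>x. (c x)^2)" and X: "0 \<le> X"
    and Fc: "\<And>x. x \<in> space M \<Longrightarrow> \<bar>F x\<bar> \<le> c x * X"
  shows "\<bar>\<integral>x. F x \<partial>M\<bar> \<le> X * sqrt (\<integral>x. (c x)^2 \<partial>M)"
proof -
  have "(\<integral>x. \<bar>F x\<bar> \<partial>M)^2 \<le> (\<integral>x. \<bar>F x\<bar>^2 \<partial>M)"
    by (rule jensen_sq[OF M, where C=C]) (use Fm Fb in auto)
  also have "\<dots> \<le> (\<integral>x. X^2 * (c x)^2 \<partial>M)"
  proof (rule integral_mono')
    show "integrable M (\<lambda>x. X^2 * (c x)^2)" using ci by simp
    fix x assume x: "x \<in> space M"
    have "\<bar>F x\<bar>^2 \<le> (c x * X)^2" by (rule power_mono[OF Fc[OF x]]) simp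
    then show "\<bar>F x\<bar>^2 \<le> X^2 * (c x)^2" by (simp add: power_mult_distrib mult.commute)
    show "0 \<le> X^2 * (c x)^2" by simp
  qed
  also have "\<dots> = X^2 * (\<integral>x. (c x)^2 \<partial>M)" by simp
  finally have "\<integral>x. \<bar>F x\<bar> \<partial>M \<le> sqrt (X^2 * (\<integral>x. (c x)^2 \<partial>M))" by (rule real_le_rsqrt)
  also have "\<dots> = X * sqrt (\<integral>x. (c x)^2 \<partial>M)" using X by (simp add: real_sqrt_mult)
  finally show ?thesis using integral_abs_bound[of M F] by linarith
qed

context mdp begin

lemma kern_app: "kern h s = P h s (\<pi>s h s)"
  unfolding kern_def by simp

lemma jensen_step:
  assumes h: "h \<in> {1..<H}"
  shows "hnorm \<nu> P \<pi>s h (Ppol P \<pi>s h (fw \<phi> u)) \<le> hnorm \<nu> P \<pi>s (Suc h) (fw \<phi> u)"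
proof -
  have h1: "h \<in> {1..H}" and h2: "Suc h \<in> {1..H}" using h by auto
  define g where "g = (\<lambda>s'. fw \<phi> u s' (\<pi>s (Suc h) s'))"
  have gm: "g \<in> borel_measurable S" unfolding g_def using pis_meas[OF h2] by measurable
  have gb: "\<bar>g x\<bar> \<le> norm u" if "x \<in> space S" for x
    unfolding g_def by (rule fw_bound[OF that pis_space[OF h2 that]])
  have Ms: "prob_space (mu \<nu> P \<pi>s (Suc h))" "sets (mu \<nu> P \<pi>s (Suc h)) = sets S" "space (mu \<nu> P \<pi>s (Suc h)) = space S"
    using mu_props[OF h2] by auto
  have Bi: "integrable (bind (mu \<nu> P \<pi>s h) (kern h)) (\<lambda>x. (\<bar>g x\<bar>)^2)"
    unfolding mu_Suc[OF h, symmetric]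
  proof (rule bm_int[where C="(norm u)^2"])
    show "finite_measure (mu \<nu> P \<pi>s (Suc h))" using Ms(1) by (simp add: prob_space.finite_measure)
    show "(\<lambda>x. \<bar>g x\<bar>^2) \<in> borel_measurable (mu \<nu> P \<pi>s (Suc h))"
      using gm Ms(2) measurable_cong_sets by measurable
    fix x assume "x \<in> space (mu \<nu> P \<pi>s (Suc h))"
    then have "\<bar>g x\<bar> \<le> norm u" using gb Ms(3) by simp
    then have "\<bar>g x\<bar>^2 \<le> (norm u)^2" by (rule power_mono) simp
    then show "\<bar>\<bar>g x\<bar>^2\<bar> \<le> (norm u)^2" by simp
  qed
  have Np: "prob_space (kern h s) \<and> sets (kern h s) = sets S" if "s \<in> space (mu \<nu> P \<pi>s h)" for s
    using kern_prob[OF h] that mu_props[OF h1] by simp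
  have kj: "(\<integral>s. (\<integral>x. g x \<partial>kern h s)^2 \<partial>mu \<nu> P \<pi>s h) \<le> (\<integral>x. (\<bar>g x\<bar>)^2 \<partial>(bind (mu \<nu> P \<pi>s h) (kern h)))"
    by (rule kernel_jensen[OF kern_meas_mu[OF h] Np gm gb borel_measurable_abs[OF gm] _ Bi]) auto
  have "(\<integral>s. (Ppol P \<pi>s h (fw \<phi> u) s (\<pi>s h s))^2 \<partial>mu \<nu> P \<pi>s h)
      = (\<integral>s. (\<integral>x. g x \<partial>kern h s)^2 \<partial>mu \<nu> P \<pi>s h)"
    unfolding Ppol_def g_def kern_app by simp
  also have "\<dots> \<le> (\<integral>x. (g x)^2 \<partial>mu \<nu> P \<pi>s (Suc h))"
    using kj unfolding mu_Suc[OF h] by simp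
  finally show ?thesis unfolding hnorm_def g_def by (rule real_sqrt_le_mono)
qed

lemma chain_norm:
  "1 \<le> h \<Longrightarrow> h + k \<le> H \<Longrightarrow> hnorm \<nu> P \<pi>s h (Pchain P \<pi>s h k (fw \<phi> v)) \<le> hnorm \<nu> P \<pi>s (h + k) (fw \<phi> v)"
proof (induction k arbitrary: h)
  case 0 then show ?case by simp
next
  case (Suc k)
  have h: "h \<in> {1..<H}" and h1: "h \<in> {1..H}" and h2: "Suc h \<in> {1..H}" using Suc.prems by auto
  obtain u1 where u1: "\<forall>s\<in>space S. \<forall>a\<in>space A. Pchain P \<pi>s (Suc h) k (fw \<phi> v) s a = fw \<phi> u1 s a"
    using chain_F[of "Suc h" k v] Suc.prems by auto
  have "hnorm \<nu> P \<pi>s h (Pchain P \<pi>s h (Suc k) (fw \<phi> v)) = hnorm \<nu> P \<pi>s h (Ppol P \<pi>s h (fw \<phi> u1))"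
  proof (rule hnorm_cong[OF h1])
    fix s assume s: "s \<in> space S"
    show "Pchain P \<pi>s h (Suc k) (fw \<phi> v) s (\<pi>s h s) = Ppol P \<pi>s h (fw \<phi> u1) s (\<pi>s h s)"
      unfolding Pchain.simps
    proof (rule Ppol_cong[OF h s pis_space[OF h1 s]])
      fix s' assume s': "s' \<in> space S"
      have "\<pi>s (Suc h) s' \<in> space A" using pis_space[OF h2 s'] .
      then show "Pchain P \<pi>s (Suc h) k (fw \<phi> v) s' (\<pi>s (Suc h) s') = fw \<phi> u1 s' (\<pi>s (Suc h) s')"
        using u1 s' by blast
    qed
  qed
  also have "\<dots> \<le> hnorm \<nu> P \<pi>s (Suc h) (fw \<phi> u1)" by (rule jensen_step[OF h])
  also have "\<dots> = hnorm \<nu> P \<pi>s (Suc h) (Pchain P \<pi>s (Suc h) k (fw \<phi> v))"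
  proof (rule hnorm_cong[OF h2])
    fix s assume s: "s \<in> space S"
    show "fw \<phi> u1 s (\<pi>s (Suc h) s) = Pchain P \<pi>s (Suc h) k (fw \<phi> v) s (\<pi>s (Suc h) s)"
      using u1 s pis_space[OF h2 s] by simp
  qed
  also have "\<dots> \<le> hnorm \<nu> P \<pi>s (Suc h + k) (fw \<phi> v)" using Suc.IH[of "Suc h"] Suc.prems by simp
  finally show ?case by simp
qed

end


context mdp begin

lemma c_props: "h \<in> {1..H} \<Longrightarrow> c h \<in> borel_measurable S \<and> (\<forall>s\<in>space S. c h s \<ge> 0)
                   \<and> integrable (mu \<nu> P \<pi>s h) (\<lambda>s. (c h s)\<^sup>2)"
  using c_reg by (rule bspec)

lemma greedy_W: "\<forall>h\<in>{1..H}. greedy_at S A (fw \<phi> (W h)) (\<pi> h) \<Longrightarrow> h \<in> {1..H} \<Longrightarrow> greedy_at S A (fw \<phi> (W h)) (\<pi> h)"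
  by (rule bspec)

lemma qnorm_nonneg: "h \<in> {1..H} \<Longrightarrow> 0 \<le> qnorm (Sigma \<nu> P \<pi>s \<phi> h) u"
  using hnorm_fw[of h u] hnorm_nonneg[of h "fw \<phi> u"] by simp

lemma partc:
  assumes gW: "\<forall>h\<in>{1..H}. greedy_at S A (fw \<phi> (W h)) (\<pi> h)"
    and hh: "1 \<le> h" "h \<le> h'" "h' \<le> H - 1" and pos: "hnorm \<nu> P \<pi>s h' (fw \<phi> v) > 0"
  shows "\<bar>\<integral>s. Pchain P \<pi>s h (h' - h) (fw \<phi> v) s (\<pi>s h s) - Pchain P \<pi>s h (h' - h) (fw \<phi> v) s (\<pi> h s)
              \<partial>(mu \<nu> P \<pi>s h)\<bar> / hnorm \<nu> P \<pi>s h' (fw \<phi> v)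
           \<le> sqrt (real CARD('d)) * cnorm \<nu> P \<pi>s h (c h)
              * hnorm \<nu> P \<pi>s h (\<lambda>s a. fw \<phi> (W h) s a - fstar A P r H h s a) / hnorm \<nu> P \<pi>s h (fstar A P r H h)"
proof -
  have h1: "h \<in> {1..H}" using hh by auto
  have gh: "greedy_at S A (fw \<phi> (W h)) (\<pi> h)" by (rule greedy_W[OF gW h1])
  have Mp: "prob_space (mu \<nu> P \<pi>s h)" "sets (mu \<nu> P \<pi>s h) = sets S" "space (mu \<nu> P \<pi>s h) = space S"
    using mu_props[OF h1] by auto
  obtain u where u: "\<forall>s\<in>space S. \<forall>a\<in>space A. Pchain P \<pi>s h (h' - h) (fw \<phi> v) s a = fw \<phi> u s a"
  proof -
    have "h + (h' - h) \<le> H" using hh by arith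
    then show ?thesis using that chain_F[of h "h' - h" v] hh by blast
  qed
  define F where "F = (\<lambda>s. fw \<phi> u s (\<pi>s h s) - fw \<phi> u s (\<pi> h s))"
  define hn where "hn = hnorm \<nu> P \<pi>s h (\<lambda>s a. fw \<phi> (W h) s a - fstar A P r H h s a)"
  define hf where "hf = hnorm \<nu> P \<pi>s h (fstar A P r H h)"
  define K where "K = sqrt (real CARD('d)) * hn / hf"
  define q where "q = qnorm (Sigma \<nu> P \<pi>s \<phi> h) u"
  have hf: "0 < hf" unfolding hf_def using fstar_pos h1 by blast
  have K0: "0 \<le> K" unfolding K_def hn_def using hf hnorm_nonneg by simp
  have q0: "0 \<le> q" unfolding q_def by (rule qnorm_nonneg[OF h1])
  have eqI: "(\<integral>s. Pchain P \<pi>s h (h' - h) (fw \<phi> v) s (\<pi>s h s) - Pchain P \<pi>s h (h' - h) (fw \<phi> v) s (\<pi> h s)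
              \<partial>(mu \<nu> P \<pi>s h)) = (\<integral>s. F s \<partial>mu \<nu> P \<pi>s h)"
  proof (intro Bochner_Integration.integral_cong refl)
    fix s assume "s \<in> space (mu \<nu> P \<pi>s h)"
    then have s: "s \<in> space S" using Mp by simp
    show "Pchain P \<pi>s h (h' - h) (fw \<phi> v) s (\<pi>s h s) - Pchain P \<pi>s h (h' - h) (fw \<phi> v) s (\<pi> h s) = F s"
      unfolding F_def using u s pis_space[OF h1 s] greedy_space[OF gh s] by simp
  qed
  have Fm: "F \<in> borel_measurable (mu \<nu> P \<pi>s h)"
  proof -
    have "F \<in> borel_measurable S" unfolding F_def
      using pis_meas[OF h1] greedy_meas[OF gh] by measurable
    then show ?thesis using Mp(2) measurable_cong_sets by blast
  qed
  have Fb: "\<bar>F s\<bar> \<le> norm u + norm u" if "s \<in> space (mu \<nu> P \<pi>s h)" for s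
  proof -
    have s: "s \<in> space S" using that Mp by simp
    show ?thesis unfolding F_def
      using fw_bound[OF s pis_space[OF h1 s], of u] fw_bound[OF s greedy_space[OF gh s], of u] by linarith
  qed
  have Fc: "\<bar>F s\<bar> \<le> c h s * (K * q)" if "s \<in> space (mu \<nu> P \<pi>s h)" for s
  proof -
    have s: "s \<in> space S" using that Mp by simp
    have "\<bar>F s\<bar> = \<bar>fw \<phi> u s (\<pi> h s) - fw \<phi> u s (\<pi>s h s)\<bar>" unfolding F_def by (simp add: abs_minus_commute)
    also have "\<dots> \<le> c h s * sqrt (real CARD('d)) * hn / hf * q"
      unfolding hn_def hf_def q_def by (rule pw_bound[OF h1 gh s])
    also have "\<dots> = c h s * (K * q)" unfolding K_def by simp
    finally show ?thesis .
  qed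
  have ci: "integrable (mu \<nu> P \<pi>s h) (\<lambda>s. (c h s)^2)" using c_props[OF h1] by simp
  have bnd: "\<bar>\<integral>s. F s \<partial>mu \<nu> P \<pi>s h\<bar> \<le> (K * q) * cnorm \<nu> P \<pi>s h (c h)"
    unfolding cnorm_def
    by (rule L1_bound[OF Mp(1) Fm Fb ci _ Fc]) (auto simp: K0 q0)
  have "q = hnorm \<nu> P \<pi>s h (fw \<phi> u)" unfolding q_def by (rule hnorm_fw[OF h1, symmetric])
  also have "\<dots> = hnorm \<nu> P \<pi>s h (Pchain P \<pi>s h (h' - h) (fw \<phi> v))"
    by (rule hnorm_cong[OF h1]) (use u pis_space[OF h1] in simp)
  also have "\<dots> \<le> hnorm \<nu> P \<pi>s (h + (h' - h)) (fw \<phi> v)" by (rule chain_norm) (use hh in arith)+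
  also have "h + (h' - h) = h'" using hh by simp
  finally have qG: "q \<le> hnorm \<nu> P \<pi>s h' (fw \<phi> v)" .
  have "\<bar>\<integral>s. F s \<partial>mu \<nu> P \<pi>s h\<bar> \<le> (K * hnorm \<nu> P \<pi>s h' (fw \<phi> v)) * cnorm \<nu> P \<pi>s h (c h)"
    using bnd mult_right_mono[OF mult_left_mono[OF qG K0] cnorm_nonneg[of h "c h"]] by linarith
  then have "\<bar>\<integral>s. F s \<partial>mu \<nu> P \<pi>s h\<bar> / hnorm \<nu> P \<pi>s h' (fw \<phi> v) \<le> K * cnorm \<nu> P \<pi>s h (c h)"
    using pos by (simp add: divide_le_eq mult_ac)
  then show ?thesis unfolding eqI K_def hn_def[symmetric] hf_def[symmetric] by (simp add: mult_ac)
qed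

end


context mdp begin

lemma fw_add: "fw \<phi> (a + b) s x = fw \<phi> a s x + fw \<phi> b s x"
  unfolding fw_def by (simp add: inner_add_right)

lemma hnorm_tri:
  assumes h: "h \<in> {1..H}"
  shows "hnorm \<nu> P \<pi>s h (fw \<phi> (a + b)) \<le> hnorm \<nu> P \<pi>s h (fw \<phi> a) + hnorm \<nu> P \<pi>s h (fw \<phi> b)"
proof -
  have Mp: "prob_space (mu \<nu> P \<pi>s h)" "sets (mu \<nu> P \<pi>s h) = sets S" "space (mu \<nu> P \<pi>s h) = space S"
    using mu_props[OF h] by auto
  have fm: "finite_measure (mu \<nu> P \<pi>s h)" using Mp(1) by (simp add: prob_space.finite_measure)
  have m: "(\<lambda>s. fw \<phi> w s (\<pi>s h s)) \<in> borel_measurable (mu \<nu> P \<pi>s h)" for w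
    using fw_comp_meas[OF pis_meas[OF h]] Mp(2) measurable_cong_sets by blast
  have b: "\<bar>fw \<phi> w s (\<pi>s h s)\<bar> \<le> norm w" if "s \<in> space (mu \<nu> P \<pi>s h)" for w s
    using fw_bound[of s "\<pi>s h s" w] pis_space[OF h, of s] that Mp(3) by simp
  show ?thesis
    unfolding hnorm_def fw_add
    by (rule int_CS[OF fm m b m b])
qed

lemma parta1:
  assumes h: "h \<in> {1..H}"
  shows "dh A \<nu> P r H \<pi>s c TYPE('d) h (fw \<phi> v1) (fw \<phi> v1) = 0
      \<and> dh A \<nu> P r H \<pi>s c TYPE('d) h (fw \<phi> v1) (fw \<phi> v2) \<ge> 0
      \<and> dh A \<nu> P r H \<pi>s c TYPE('d) h (fw \<phi> v1) (fw \<phi> v2) = dh A \<nu> P r H \<pi>s c TYPE('d) h (fw \<phi> v2) (fw \<phi> v1)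
      \<and> dh A \<nu> P r H \<pi>s c TYPE('d) h (fw \<phi> v1) (fw \<phi> v3)
          \<le> dh A \<nu> P r H \<pi>s c TYPE('d) h (fw \<phi> v1) (fw \<phi> v2) + dh A \<nu> P r H \<pi>s c TYPE('d) h (fw \<phi> v2) (fw \<phi> v3)"
proof -
  define Z where "Z = sqrt (real CARD('d)) * cnorm \<nu> P \<pi>s h (c h) / hnorm \<nu> P \<pi>s h (fstar A P r H h)"
  have hf: "0 < hnorm \<nu> P \<pi>s h (fstar A P r H h)" using fstar_pos h by blast
  have Z0: "0 \<le> Z" unfolding Z_def using hf cnorm_nonneg by simp
  have d: "dh A \<nu> P r H \<pi>s c TYPE('d) h f f' = Z * hnorm \<nu> P \<pi>s h (\<lambda>s a. f s a - f' s a)" for f f'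
    unfolding dh_def Z_def by simp
  have e1: "hnorm \<nu> P \<pi>s h (\<lambda>s a. fw \<phi> v1 s a - fw \<phi> v1 s a) = 0"
    unfolding hnorm_def by simp
  have e3: "hnorm \<nu> P \<pi>s h (\<lambda>s a. fw \<phi> v1 s a - fw \<phi> v2 s a) = hnorm \<nu> P \<pi>s h (\<lambda>s a. fw \<phi> v2 s a - fw \<phi> v1 s a)"
    unfolding hnorm_def by (simp only: power2_commute)
  have "hnorm \<nu> P \<pi>s h (fw \<phi> ((v1 - v2) + (v2 - v3))) \<le> hnorm \<nu> P \<pi>s h (fw \<phi> (v1 - v2)) + hnorm \<nu> P \<pi>s h (fw \<phi> (v2 - v3))"
    by (rule hnorm_tri[OF h])
  then have e4: "hnorm \<nu> P \<pi>s h (\<lambda>s a. fw \<phi> v1 s a - fw \<phi> v3 s a) \<le> hnorm \<nu> P \<pi>s h (\<lambda>s a. fw \<phi> v1 s a - fw \<phi> v2 s a) + hnorm \<nu> P \<pi>s h (\<lambda>s a. fw \<phi> v2 s a - fw \<phi> v3 s a)"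
    unfolding fw_diff_fun by simp
  show ?thesis unfolding d
    using e1 e3 mult_left_mono[OF e4 Z0] Z0 hnorm_nonneg by (simp add: distrib_left)
qed

lemma parta2:
  assumes gW: "\<forall>h\<in>{1..H}. greedy_at S A (fw \<phi> (W h)) (\<pi> h)"
    and h: "h \<in> {2..H}" and pos: "hnorm \<nu> P \<pi>s h (fw \<phi> v) > 0"
  shows "hnorm \<nu> P \<pi>s (h - 1) (\<lambda>s a. Ppol P \<pi> (h - 1) (fw \<phi> v) s a - Ppol P \<pi>s (h - 1) (fw \<phi> v) s a)
             / hnorm \<nu> P \<pi>s h (fw \<phi> v)
           \<le> dh A \<nu> P r H \<pi>s c TYPE('d) h (fw \<phi> (W h)) (fstar A P r H h)"
proof -
  obtain hm where hm: "h = Suc hm" using h by (cases h) auto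
  have hm1: "hm \<in> {1..<H}" and hmH: "hm \<in> {1..H}" and h1: "h \<in> {1..H}" using h hm by auto
  have gh: "greedy_at S A (fw \<phi> (W h)) (\<pi> h)" by (rule greedy_W[OF gW h1])
  define hn where "hn = hnorm \<nu> P \<pi>s h (\<lambda>s a. fw \<phi> (W h) s a - fstar A P r H h s a)"
  define hf where "hf = hnorm \<nu> P \<pi>s h (fstar A P r H h)"
  define K where "K = sqrt (real CARD('d)) * hn / hf"
  define q where "q = qnorm (Sigma \<nu> P \<pi>s \<phi> h) v"
  define cn where "cn = cnorm \<nu> P \<pi>s h (c h)"
  have hf: "0 < hf" unfolding hf_def using fstar_pos h1 by blast
  have K0: "0 \<le> K" unfolding K_def hn_def using hf hnorm_nonneg by simp
  have q0: "0 \<le> q" unfolding q_def by (rule qnorm_nonneg[OF h1])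
  have cn0: "0 \<le> cn" unfolding cn_def by (rule cnorm_nonneg)
  have qh: "q = hnorm \<nu> P \<pi>s h (fw \<phi> v)" unfolding q_def by (rule hnorm_fw[OF h1, symmetric])
  define g where "g = (\<lambda>s'. fw \<phi> v s' (\<pi> h s') - fw \<phi> v s' (\<pi>s h s'))"
  define B where "B = (\<lambda>s'. c h s' * (K * q))"
  have gm: "g \<in> borel_measurable S" unfolding g_def
    using pis_meas[OF h1] greedy_meas[OF gh] by measurable
  have gb: "\<bar>g x\<bar> \<le> norm v + norm v" if x: "x \<in> space S" for x
    unfolding g_def using fw_bound[OF x pis_space[OF h1 x], of v] fw_bound[OF x greedy_space[OF gh x], of v] by linarith
  have cp: "c h \<in> borel_measurable S" "integrable (mu \<nu> P \<pi>s h) (\<lambda>s. (c h s)\<^sup>2)" using c_props[OF h1] by auto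
  have Bm: "B \<in> borel_measurable S" unfolding B_def using cp(1) by measurable
  have gB: "\<bar>g x\<bar> \<le> B x" if x: "x \<in> space S" for x
  proof -
    have "\<bar>g x\<bar> \<le> c h x * sqrt (real CARD('d)) * hn / hf * q"
      unfolding g_def hn_def hf_def q_def by (rule pw_bound[OF h1 gh x])
    also have "\<dots> = B x" unfolding B_def K_def by simp
    finally show ?thesis .
  qed
  have Bi': "integrable (mu \<nu> P \<pi>s h) (\<lambda>x. (K * q)^2 * (c h x)^2)" using cp(2) by simp
  have Bi: "integrable (bind (mu \<nu> P \<pi>s hm) (kern hm)) (\<lambda>x. (B x)^2)"
    unfolding mu_Suc[OF hm1, symmetric] hm[symmetric] B_def
    using Bi' by (simp add: power_mult_distrib mult.commute)
  have Np: "prob_space (kern hm s) \<and> sets (kern hm s) = sets S" if "s \<in> space (mu \<nu> P \<pi>s hm)" for s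
    using kern_prob[OF hm1] that mu_props[OF hmH] by simp
  have kj: "(\<integral>s. (\<integral>x. g x \<partial>kern hm s)^2 \<partial>mu \<nu> P \<pi>s hm) \<le> (\<integral>x. (B x)^2 \<partial>(bind (mu \<nu> P \<pi>s hm) (kern hm)))"
    by (rule kernel_jensen[OF kern_meas_mu[OF hm1] Np gm gb Bm gB Bi]) auto
  have rhs: "(\<integral>x. (B x)^2 \<partial>(bind (mu \<nu> P \<pi>s hm) (kern hm))) = (K * q * cn)^2"
  proof -
    have "(\<integral>x. (B x)^2 \<partial>(bind (mu \<nu> P \<pi>s hm) (kern hm))) = (\<integral>x. (K * q)^2 * (c h x)^2 \<partial>mu \<nu> P \<pi>s h)"
      unfolding mu_Suc[OF hm1, symmetric] hm[symmetric] B_def by (simp add: power_mult_distrib mult.commute)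
    also have "\<dots> = (K * q)^2 * (\<integral>x. (c h x)^2 \<partial>mu \<nu> P \<pi>s h)" by simp
    also have "(\<integral>x. (c h x)^2 \<partial>mu \<nu> P \<pi>s h) = cn^2"
    proof -
      have "0 \<le> (\<integral>x. (c h x)^2 \<partial>mu \<nu> P \<pi>s h)" by simp
      then show ?thesis unfolding cn_def cnorm_def by simp
    qed
    finally show ?thesis by (simp add: power_mult_distrib)
  qed
  have lhs: "(\<integral>s. (Ppol P \<pi> hm (fw \<phi> v) s (\<pi>s hm s) - Ppol P \<pi>s hm (fw \<phi> v) s (\<pi>s hm s))^2 \<partial>mu \<nu> P \<pi>s hm)
     = (\<integral>s. (\<integral>x. g x \<partial>kern hm s)^2 \<partial>mu \<nu> P \<pi>s hm)"
  proof (intro Bochner_Integration.integral_cong refl)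
    fix s assume "s \<in> space (mu \<nu> P \<pi>s hm)"
    then have s: "s \<in> space S" using mu_props[OF hmH] by simp
    have kp: "prob_space (kern hm s)" "sets (kern hm s) = sets S" using kern_prob[OF hm1 s] by auto
    have fmk: "finite_measure (kern hm s)" using kp(1) by (simp add: prob_space.finite_measure)
    have sp: "space (kern hm s) = space S" using kern_space[OF hm1 s] .
    have i1: "integrable (kern hm s) (\<lambda>x. fw \<phi> v x (\<pi> h x))"
    proof (rule bm_int[OF fmk, where C="norm v"])
      show "(\<lambda>x. fw \<phi> v x (\<pi> h x)) \<in> borel_measurable (kern hm s)"
        using fw_comp_meas[OF greedy_meas[OF gh]] kp(2) measurable_cong_sets by blast
      fix x assume "x \<in> space (kern hm s)"
      then have x: "x \<in> space S" using sp by simp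
      show "\<bar>fw \<phi> v x (\<pi> h x)\<bar> \<le> norm v" by (rule fw_bound[OF x greedy_space[OF gh x]])
    qed
    have i2: "integrable (kern hm s) (\<lambda>x. fw \<phi> v x (\<pi>s h x))"
    proof (rule bm_int[OF fmk, where C="norm v"])
      show "(\<lambda>x. fw \<phi> v x (\<pi>s h x)) \<in> borel_measurable (kern hm s)"
        using fw_comp_meas[OF pis_meas[OF h1]] kp(2) measurable_cong_sets by blast
      fix x assume "x \<in> space (kern hm s)"
      then have x: "x \<in> space S" using sp by simp
      show "\<bar>fw \<phi> v x (\<pi>s h x)\<bar> \<le> norm v" by (rule fw_bound[OF x pis_space[OF h1 x]])
    qed
    have "Ppol P \<pi> hm (fw \<phi> v) s (\<pi>s hm s) - Ppol P \<pi>s hm (fw \<phi> v) s (\<pi>s hm s) = (\<integral>x. g x \<partial>kern hm s)"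
      unfolding Ppol_def g_def kern_app[symmetric] hm[symmetric]
      using Bochner_Integration.integral_diff[OF i1 i2] by simp
    then show "(Ppol P \<pi> hm (fw \<phi> v) s (\<pi>s hm s) - Ppol P \<pi>s hm (fw \<phi> v) s (\<pi>s hm s))^2 = (\<integral>x. g x \<partial>kern hm s)^2"
      by simp
  qed
  have "hnorm \<nu> P \<pi>s hm (\<lambda>s a. Ppol P \<pi> hm (fw \<phi> v) s a - Ppol P \<pi>s hm (fw \<phi> v) s a) \<le> sqrt ((K * q * cn)^2)"
  proof -
    have "(\<integral>s. (\<integral>x. g x \<partial>kern hm s)^2 \<partial>mu \<nu> P \<pi>s hm) \<le> (K * q * cn)^2" using kj rhs by simp
    then show ?thesis unfolding hnorm_def lhs by (rule real_sqrt_le_mono)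
  qed
  also have "\<dots> = K * q * cn" using K0 q0 cn0 by simp
  finally have main: "hnorm \<nu> P \<pi>s hm (\<lambda>s a. Ppol P \<pi> hm (fw \<phi> v) s a - Ppol P \<pi>s hm (fw \<phi> v) s a) \<le> K * q * cn" .
  have qpos: "0 < q" using pos qh by simp
  have "hnorm \<nu> P \<pi>s hm (\<lambda>s a. Ppol P \<pi> hm (fw \<phi> v) s a - Ppol P \<pi>s hm (fw \<phi> v) s a) / q \<le> K * cn"
    using main qpos by (simp add: divide_le_eq mult_ac)
  moreover have "dh A \<nu> P r H \<pi>s c TYPE('d) h (fw \<phi> (W h)) (fstar A P r H h) = K * cn"
    unfolding dh_def K_def cn_def hn_def hf_def by simp
  ultimately show ?thesis using hm qh by simp
qed

end


context mdp begin

lemma SUP_greedy: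
  assumes g: "greedy_at S A f p" and s: "s \<in> space S"
  shows "(SUP a\<in>space A. f s a) = f s (p s)"
  by (rule cSup_eq_maximum) (use greedy_space[OF g s] greedy_max[OF g s] in auto)

lemma partb_lip:
  assumes dW: "\<forall>h\<in>{1..H}. dh A \<nu> P r H \<pi>s c TYPE('d) h (fw \<phi> (W h)) (fstar A P r H h) \<le> \<rho> h"
    and h: "h \<in> {1..H-1}"
  shows "hnorm \<nu> P \<pi>s h (\<lambda>s a. Tstar A P r h (fw \<phi> (W (h + 1))) s a - Tstar A P r h (fstar A P r H (h + 1)) s a)
      \<le> (1 + \<rho> (h + 1)) * hnorm \<nu> P \<pi>s (h + 1) (\<lambda>s a. fw \<phi> (W (h + 1)) s a - fstar A P r H (h + 1) s a)"
proof -
  have h1: "h \<in> {1..<H}" and hH: "h \<in> {1..H}" and h2: "Suc h \<in> {1..H}" using h by auto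
  define w where "w = W (Suc h)"
  obtain p where gp: "greedy_at S A (fw \<phi> w) p" using greedy_exists by blast
  define hn where "hn = hnorm \<nu> P \<pi>s (Suc h) (\<lambda>s a. fw \<phi> w s a - fstar A P r H (Suc h) s a)"
  define hf where "hf = hnorm \<nu> P \<pi>s (Suc h) (fstar A P r H (Suc h))"
  define cn where "cn = cnorm \<nu> P \<pi>s (Suc h) (c (Suc h))"
  define Y where "Y = sqrt (real CARD('d)) * hf * (hn / hf)^2"
  have hf: "0 < hf" unfolding hf_def using fstar_pos h2 by blast
  have hn0: "0 \<le> hn" unfolding hn_def by (rule hnorm_nonneg)
  have cn0: "0 \<le> cn" unfolding cn_def by (rule cnorm_nonneg)
  have Y0: "0 \<le> Y" unfolding Y_def using hf by simp
  define D where "D = (\<lambda>s'. fw \<phi> w s' (p s') - fw \<phi> (ws (Suc h)) s' (\<pi>s (Suc h) s'))"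
  define g1 where "g1 = (\<lambda>s'. fw \<phi> w s' (p s') - fw \<phi> w s' (\<pi>s (Suc h) s'))"
  define g2 where "g2 = (\<lambda>s'. fw \<phi> w s' (\<pi>s (Suc h) s') - fw \<phi> (ws (Suc h)) s' (\<pi>s (Suc h) s'))"
  have Dg: "D s = g1 s + g2 s" for s unfolding D_def g1_def g2_def by simp
  have pm: "p \<in> S \<rightarrow>\<^sub>M A" by (rule greedy_meas[OF gp])
  have psm: "\<pi>s (Suc h) \<in> S \<rightarrow>\<^sub>M A" by (rule pis_meas[OF h2])
  have Dm: "D \<in> borel_measurable S" unfolding D_def using pm psm by measurable
  have g1m: "g1 \<in> borel_measurable S" unfolding g1_def using pm psm by measurable
  have g2m: "g2 \<in> borel_measurable S" unfolding g2_def using pm psm by measurable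
  have Db: "\<bar>D x\<bar> \<le> norm w + norm (ws (Suc h))" if x: "x \<in> space S" for x
    unfolding D_def using fw_bound[OF x greedy_space[OF gp x], of w] fw_bound[OF x pis_space[OF h2 x], of "ws (Suc h)"] by linarith
  have g1b: "\<bar>g1 x\<bar> \<le> norm w + norm w" if x: "x \<in> space S" for x
    unfolding g1_def using fw_bound[OF x greedy_space[OF gp x], of w] fw_bound[OF x pis_space[OF h2 x], of w] by linarith
  have g2b: "\<bar>g2 x\<bar> \<le> norm w + norm (ws (Suc h))" if x: "x \<in> space S" for x
    unfolding g2_def using fw_bound[OF x pis_space[OF h2 x], of w] fw_bound[OF x pis_space[OF h2 x], of "ws (Suc h)"] by linarith
  have M2: "prob_space (mu \<nu> P \<pi>s (Suc h))" "sets (mu \<nu> P \<pi>s (Suc h)) = sets S" "space (mu \<nu> P \<pi>s (Suc h)) = space S"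
    using mu_props[OF h2] by auto
  have fm2: "finite_measure (mu \<nu> P \<pi>s (Suc h))" using M2(1) by (simp add: prob_space.finite_measure)
  have M1: "space (mu \<nu> P \<pi>s h) = space S" using mu_props[OF hH] by simp
  have Tdiff: "Tstar A P r h (fw \<phi> w) s (\<pi>s h s) - Tstar A P r h (fstar A P r H (Suc h)) s (\<pi>s h s)
      = (\<integral>x. D x \<partial>kern h s)" if s: "s \<in> space S" for s
  proof -
    have kp: "prob_space (kern h s)" "sets (kern h s) = sets S" using kern_prob[OF h1 s] by auto
    have fmk: "finite_measure (kern h s)" using kp(1) by (simp add: prob_space.finite_measure)
    have sp: "space (kern h s) = space S" using kern_space[OF h1 s] .
    have e1: "(\<integral>s'. (SUP a'\<in>space A. fw \<phi> w s' a') \<partial>kern h s) = (\<integral>s'. fw \<phi> w s' (p s') \<partial>kern h s)"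
      by (intro Bochner_Integration.integral_cong refl) (simp add: sp SUP_greedy[OF gp])
    have e2: "(\<integral>s'. (SUP a'\<in>space A. fstar A P r H (Suc h) s' a') \<partial>kern h s)
        = (\<integral>s'. fw \<phi> (ws (Suc h)) s' (\<pi>s (Suc h) s') \<partial>kern h s)"
    proof (intro Bochner_Integration.integral_cong refl)
      fix s' assume "s' \<in> space (kern h s)"
      then have s': "s' \<in> space S" using sp by simp
      have g: "greedy_at S A (fstar A P r H (Suc h)) (\<pi>s (Suc h))" using pistar_greedy h2 by blast
      show "(SUP a'\<in>space A. fstar A P r H (Suc h) s' a') = fw \<phi> (ws (Suc h)) s' (\<pi>s (Suc h) s')"
        using SUP_greedy[OF g s'] fstar_eq[OF h2 s' pis_space[OF h2 s']] by simp
    qed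
    have i1: "integrable (kern h s) (\<lambda>x. fw \<phi> w x (p x))"
    proof (rule bm_int[OF fmk, where C="norm w"])
      show "(\<lambda>x. fw \<phi> w x (p x)) \<in> borel_measurable (kern h s)"
        using fw_comp_meas[OF pm] kp(2) measurable_cong_sets by blast
      fix x assume "x \<in> space (kern h s)"
      then have x: "x \<in> space S" using sp by simp
      show "\<bar>fw \<phi> w x (p x)\<bar> \<le> norm w" by (rule fw_bound[OF x greedy_space[OF gp x]])
    qed
    have i2: "integrable (kern h s) (\<lambda>x. fw \<phi> (ws (Suc h)) x (\<pi>s (Suc h) x))"
    proof (rule bm_int[OF fmk, where C="norm (ws (Suc h))"])
      show "(\<lambda>x. fw \<phi> (ws (Suc h)) x (\<pi>s (Suc h) x)) \<in> borel_measurable (kern h s)"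
        using fw_comp_meas[OF psm] kp(2) measurable_cong_sets by blast
      fix x assume "x \<in> space (kern h s)"
      then have x: "x \<in> space S" using sp by simp
      show "\<bar>fw \<phi> (ws (Suc h)) x (\<pi>s (Suc h) x)\<bar> \<le> norm (ws (Suc h))" by (rule fw_bound[OF x pis_space[OF h2 x]])
    qed
    show ?thesis
      unfolding Tstar_def kern_app[symmetric] D_def
      using e1 e2 Bochner_Integration.integral_diff[OF i1 i2] by simp
  qed
  have Bi: "integrable (bind (mu \<nu> P \<pi>s h) (kern h)) (\<lambda>x. (\<bar>D x\<bar>)^2)"
    unfolding mu_Suc[OF h1, symmetric]
  proof (rule bm_int[OF fm2, where C="(norm w + norm (ws (Suc h)))^2"])
    show "(\<lambda>x. \<bar>D x\<bar>^2) \<in> borel_measurable (mu \<nu> P \<pi>s (Suc h))"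
      using Dm M2(2) measurable_cong_sets by measurable
    fix x assume "x \<in> space (mu \<nu> P \<pi>s (Suc h))"
    then have "\<bar>D x\<bar> \<le> norm w + norm (ws (Suc h))" using Db M2(3) by simp
    then have "\<bar>D x\<bar>^2 \<le> (norm w + norm (ws (Suc h)))^2" by (rule power_mono) simp
    then show "\<bar>\<bar>D x\<bar>^2\<bar> \<le> (norm w + norm (ws (Suc h)))^2" by simp
  qed
  have Np: "prob_space (kern h s) \<and> sets (kern h s) = sets S" if "s \<in> space (mu \<nu> P \<pi>s h)" for s
    using kern_prob[OF h1] that M1 by simp
  have kj: "(\<integral>s. (\<integral>x. D x \<partial>kern h s)^2 \<partial>mu \<nu> P \<pi>s h) \<le> (\<integral>x. (\<bar>D x\<bar>)^2 \<partial>(bind (mu \<nu> P \<pi>s h) (kern h)))"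
    by (rule kernel_jensen[OF kern_meas_mu[OF h1] Np Dm Db borel_measurable_abs[OF Dm] _ Bi]) auto
  have step2: "hnorm \<nu> P \<pi>s h (\<lambda>s a. Tstar A P r h (fw \<phi> w) s a - Tstar A P r h (fstar A P r H (Suc h)) s a)
      \<le> sqrt (\<integral>x. (D x)^2 \<partial>mu \<nu> P \<pi>s (Suc h))"
  proof -
    have "(\<integral>s. (Tstar A P r h (fw \<phi> w) s (\<pi>s h s) - Tstar A P r h (fstar A P r H (Suc h)) s (\<pi>s h s))^2 \<partial>mu \<nu> P \<pi>s h)
        = (\<integral>s. (\<integral>x. D x \<partial>kern h s)^2 \<partial>mu \<nu> P \<pi>s h)"
      by (intro Bochner_Integration.integral_cong refl) (simp add: M1 Tdiff)
    also have "\<dots> \<le> (\<integral>x. (D x)^2 \<partial>mu \<nu> P \<pi>s (Suc h))" using kj unfolding mu_Suc[OF h1] by simp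
    finally show ?thesis unfolding hnorm_def by (rule real_sqrt_le_mono)
  qed
  have step3: "sqrt (\<integral>x. (D x)^2 \<partial>mu \<nu> P \<pi>s (Suc h))
      \<le> sqrt (\<integral>x. (g1 x)^2 \<partial>mu \<nu> P \<pi>s (Suc h)) + sqrt (\<integral>x. (g2 x)^2 \<partial>mu \<nu> P \<pi>s (Suc h))"
    unfolding Dg
  proof (rule int_CS[OF fm2])
    show "g1 \<in> borel_measurable (mu \<nu> P \<pi>s (Suc h))" using g1m M2(2) measurable_cong_sets by blast
    show "g2 \<in> borel_measurable (mu \<nu> P \<pi>s (Suc h))" using g2m M2(2) measurable_cong_sets by blast
    show "\<bar>g1 x\<bar> \<le> norm w + norm w" if "x \<in> space (mu \<nu> P \<pi>s (Suc h))" for x using g1b that M2(3) by simp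
    show "\<bar>g2 x\<bar> \<le> norm w + norm (ws (Suc h))" if "x \<in> space (mu \<nu> P \<pi>s (Suc h))" for x using g2b that M2(3) by simp
  qed
  have step4: "sqrt (\<integral>x. (g2 x)^2 \<partial>mu \<nu> P \<pi>s (Suc h)) = hn"
    unfolding hn_def hnorm_def
  proof (intro arg_cong[where f=sqrt] Bochner_Integration.integral_cong refl)
    fix x assume "x \<in> space (mu \<nu> P \<pi>s (Suc h))"
    then have x: "x \<in> space S" using M2(3) by simp
    show "(g2 x)^2 = (fw \<phi> w x (\<pi>s (Suc h) x) - fstar A P r H (Suc h) x (\<pi>s (Suc h) x))^2"
      unfolding g2_def using fstar_eq[OF h2 x pis_space[OF h2 x]] by simp
  qed
  have cp: "integrable (mu \<nu> P \<pi>s (Suc h)) (\<lambda>s. (c (Suc h) s)\<^sup>2)" "\<forall>s\<in>space S. c (Suc h) s \<ge> 0"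
    using c_props[OF h2] by auto
  have step5: "sqrt (\<integral>x. (g1 x)^2 \<partial>mu \<nu> P \<pi>s (Suc h)) \<le> Y * cn"
  proof -
    have "(\<integral>x. (g1 x)^2 \<partial>mu \<nu> P \<pi>s (Suc h)) \<le> (\<integral>x. Y^2 * (c (Suc h) x)^2 \<partial>mu \<nu> P \<pi>s (Suc h))"
    proof (rule integral_mono')
      show "integrable (mu \<nu> P \<pi>s (Suc h)) (\<lambda>x. Y^2 * (c (Suc h) x)^2)" using cp(1) by simp
      fix x assume "x \<in> space (mu \<nu> P \<pi>s (Suc h))"
      then have x: "x \<in> space S" using M2(3) by simp
      have lo: "0 \<le> g1 x" unfolding g1_def using greedy_max[OF gp x pis_space[OF h2 x]] by simp
      have up: "g1 x \<le> c (Suc h) x * Y"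
        using conjunct2[OF curv_at[OF h2 gp x]] unfolding g1_def Y_def hn_def hf_def w_def by (simp add: mult_ac)
      have "(g1 x)^2 \<le> (c (Suc h) x * Y)^2" by (rule power_mono[OF up lo])
      then show "(g1 x)^2 \<le> Y^2 * (c (Suc h) x)^2" by (simp add: power_mult_distrib mult.commute)
      show "0 \<le> Y^2 * (c (Suc h) x)^2" by simp
    qed
    also have "\<dots> = Y^2 * cn^2"
    proof -
      have "0 \<le> (\<integral>x. (c (Suc h) x)^2 \<partial>mu \<nu> P \<pi>s (Suc h))" by simp
      then show ?thesis unfolding cn_def cnorm_def by simp
    qed
    also have "\<dots> = (Y * cn)^2" by (simp add: power_mult_distrib)
    finally show ?thesis using Y0 cn0 real_sqrt_le_mono by fastforce
  qed
  have step6: "Y * cn \<le> \<rho> (Suc h) * hn"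
  proof -
    have "dh A \<nu> P r H \<pi>s c TYPE('d) (Suc h) (fw \<phi> w) (fstar A P r H (Suc h)) \<le> \<rho> (Suc h)"
      using dW h2 unfolding w_def by blast
    then have d: "sqrt (real CARD('d)) * cn / hf * hn \<le> \<rho> (Suc h)"
      unfolding dh_def cn_def hf_def hn_def .
    have "Y * cn = (sqrt (real CARD('d)) * cn / hf * hn) * hn"
      unfolding Y_def using hf by (simp add: power2_eq_square field_simps)
    also have "\<dots> \<le> \<rho> (Suc h) * hn" by (rule mult_right_mono[OF d hn0])
    finally show ?thesis .
  qed
  have "hnorm \<nu> P \<pi>s h (\<lambda>s a. Tstar A P r h (fw \<phi> w) s a - Tstar A P r h (fstar A P r H (Suc h)) s a)
      \<le> (1 + \<rho> (Suc h)) * hn"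
    using step2 step3 step4 step5 step6 by (simp add: distrib_right)
  then show ?thesis unfolding w_def hn_def by simp
qed

end


context mdp begin

lemma main:
  shows
    "(\<forall>h\<in>{1..H}. \<forall>v1 v2 v3.
        dh A \<nu> P r H \<pi>s c TYPE('d) h (fw \<phi> v1) (fw \<phi> v1) = 0
      \<and> dh A \<nu> P r H \<pi>s c TYPE('d) h (fw \<phi> v1) (fw \<phi> v2) \<ge> 0
      \<and> dh A \<nu> P r H \<pi>s c TYPE('d) h (fw \<phi> v1) (fw \<phi> v2) = dh A \<nu> P r H \<pi>s c TYPE('d) h (fw \<phi> v2) (fw \<phi> v1)
      \<and> dh A \<nu> P r H \<pi>s c TYPE('d) h (fw \<phi> v1) (fw \<phi> v3)
          \<le> dh A \<nu> P r H \<pi>s c TYPE('d) h (fw \<phi> v1) (fw \<phi> v2) + dh A \<nu> P r H \<pi>s c TYPE('d) h (fw \<phi> v2) (fw \<phi> v3))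
   \<and> (\<forall>W \<pi>. (\<forall>h\<in>{1..H}. greedy_at S A (fw \<phi> (W h)) (\<pi> h)) \<longrightarrow>
        (\<forall>h\<in>{2..H}. \<forall>v. hnorm \<nu> P \<pi>s h (fw \<phi> v) > 0 \<longrightarrow>
           hnorm \<nu> P \<pi>s (h - 1) (\<lambda>s a. Ppol P \<pi> (h - 1) (fw \<phi> v) s a - Ppol P \<pi>s (h - 1) (fw \<phi> v) s a)
             / hnorm \<nu> P \<pi>s h (fw \<phi> v)
           \<le> dh A \<nu> P r H \<pi>s c TYPE('d) h (fw \<phi> (W h)) (fstar A P r H h)))
   \<and> ((\<forall>h\<in>{1..H}. 0 < \<rho> h \<and> \<rho> h \<le> 1 / (2 * (real H - real h + 1)))
       \<and> (\<forall>h\<in>{2..H-1}. \<rho> h \<le> (1/2) * (1 / (real H - real h + 1)) * (1 / (1 + ln (real H))))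
      \<longrightarrow> (\<exists>\<kappa>::nat \<Rightarrow> real.
            (\<forall>W. (\<forall>h\<in>{1..H}. dh A \<nu> P r H \<pi>s c TYPE('d) h (fw \<phi> (W h)) (fstar A P r H h) \<le> \<rho> h) \<longrightarrow>
               (\<forall>h\<in>{1..H-1}.
                  hnorm \<nu> P \<pi>s h (\<lambda>s a. Tstar A P r h (fw \<phi> (W (h + 1))) s a - Tstar A P r h (fstar A P r H (h + 1)) s a)
                  \<le> \<kappa> h * hnorm \<nu> P \<pi>s (h + 1) (\<lambda>s a. fw \<phi> (W (h + 1)) s a - fstar A P r H (h + 1) s a)))
          \<and> (\<forall>h h'. 1 \<le> h \<and> h \<le> h' \<and> h' \<le> H \<longrightarrow> (\<Prod>i\<in>{h..<h'}. \<kappa> i) \<le> 3)))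
   \<and> (\<forall>W \<pi>. (\<forall>h\<in>{1..H}. greedy_at S A (fw \<phi> (W h)) (\<pi> h)) \<longrightarrow>
        (\<forall>h h'. 1 \<le> h \<and> h \<le> h' \<and> h' \<le> H - 1 \<longrightarrow> (\<forall>v. hnorm \<nu> P \<pi>s h' (fw \<phi> v) > 0 \<longrightarrow>
           \<bar>\<integral>s. Pchain P \<pi>s h (h' - h) (fw \<phi> v) s (\<pi>s h s) - Pchain P \<pi>s h (h' - h) (fw \<phi> v) s (\<pi> h s)
              \<partial>(mu \<nu> P \<pi>s h)\<bar> / hnorm \<nu> P \<pi>s h' (fw \<phi> v)
           \<le> sqrt (real CARD('d)) * cnorm \<nu> P \<pi>s h (c h)
              * hnorm \<nu> P \<pi>s h (\<lambda>s a. fw \<phi> (W h) s a - fstar A P r H h s a) / hnorm \<nu> P \<pi>s h (fstar A P r H h))))"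
proof (intro conjI)
  show "\<forall>h\<in>{1..H}. \<forall>v1 v2 v3.
        dh A \<nu> P r H \<pi>s c TYPE('d) h (fw \<phi> v1) (fw \<phi> v1) = 0
      \<and> dh A \<nu> P r H \<pi>s c TYPE('d) h (fw \<phi> v1) (fw \<phi> v2) \<ge> 0
      \<and> dh A \<nu> P r H \<pi>s c TYPE('d) h (fw \<phi> v1) (fw \<phi> v2) = dh A \<nu> P r H \<pi>s c TYPE('d) h (fw \<phi> v2) (fw \<phi> v1)
      \<and> dh A \<nu> P r H \<pi>s c TYPE('d) h (fw \<phi> v1) (fw \<phi> v3)
          \<le> dh A \<nu> P r H \<pi>s c TYPE('d) h (fw \<phi> v1) (fw \<phi> v2) + dh A \<nu> P r H \<pi>s c TYPE('d) h (fw \<phi> v2) (fw \<phi> v3)"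
    using parta1 by blast
  show "\<forall>W \<pi>. (\<forall>h\<in>{1..H}. greedy_at S A (fw \<phi> (W h)) (\<pi> h)) \<longrightarrow>
        (\<forall>h\<in>{2..H}. \<forall>v. hnorm \<nu> P \<pi>s h (fw \<phi> v) > 0 \<longrightarrow>
           hnorm \<nu> P \<pi>s (h - 1) (\<lambda>s a. Ppol P \<pi> (h - 1) (fw \<phi> v) s a - Ppol P \<pi>s (h - 1) (fw \<phi> v) s a)
             / hnorm \<nu> P \<pi>s h (fw \<phi> v)
           \<le> dh A \<nu> P r H \<pi>s c TYPE('d) h (fw \<phi> (W h)) (fstar A P r H h))"
    using parta2 by blast
  show "(\<forall>h\<in>{1..H}. 0 < \<rho> h \<and> \<rho> h \<le> 1 / (2 * (real H - real h + 1)))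
       \<and> (\<forall>h\<in>{2..H-1}. \<rho> h \<le> (1/2) * (1 / (real H - real h + 1)) * (1 / (1 + ln (real H))))
      \<longrightarrow> (\<exists>\<kappa>::nat \<Rightarrow> real.
            (\<forall>W. (\<forall>h\<in>{1..H}. dh A \<nu> P r H \<pi>s c TYPE('d) h (fw \<phi> (W h)) (fstar A P r H h) \<le> \<rho> h) \<longrightarrow>
               (\<forall>h\<in>{1..H-1}.
                  hnorm \<nu> P \<pi>s h (\<lambda>s a. Tstar A P r h (fw \<phi> (W (h + 1))) s a - Tstar A P r h (fstar A P r H (h + 1)) s a)
                  \<le> \<kappa> h * hnorm \<nu> P \<pi>s (h + 1) (\<lambda>s a. fw \<phi> (W (h + 1)) s a - fstar A P r H (h + 1) s a)))
          \<and> (\<forall>h h'. 1 \<le> h \<and> h \<le> h' \<and> h' \<le> H \<longrightarrow> (\<Prod>i\<in>{h..<h'}. \<kappa> i) \<le> 3))"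
  proof (intro impI)
    assume rr: "(\<forall>h\<in>{1..H}. 0 < \<rho> h \<and> \<rho> h \<le> 1 / (2 * (real H - real h + 1)))
       \<and> (\<forall>h\<in>{2..H-1}. \<rho> h \<le> (1/2) * (1 / (real H - real h + 1)) * (1 / (1 + ln (real H))))"
    show "\<exists>\<kappa>::nat \<Rightarrow> real.
            (\<forall>W. (\<forall>h\<in>{1..H}. dh A \<nu> P r H \<pi>s c TYPE('d) h (fw \<phi> (W h)) (fstar A P r H h) \<le> \<rho> h) \<longrightarrow>
               (\<forall>h\<in>{1..H-1}.
                  hnorm \<nu> P \<pi>s h (\<lambda>s a. Tstar A P r h (fw \<phi> (W (h + 1))) s a - Tstar A P r h (fstar A P r H (h + 1)) s a)
                  \<le> \<kappa> h * hnorm \<nu> P \<pi>s (h + 1) (\<lambda>s a. fw \<phi> (W (h + 1)) s a - fstar A P r H (h + 1) s a)))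
          \<and> (\<forall>h h'. 1 \<le> h \<and> h \<le> h' \<and> h' \<le> H \<longrightarrow> (\<Prod>i\<in>{h..<h'}. \<kappa> i) \<le> 3)"
    proof (intro exI[where x="\<lambda>i. 1 + \<rho> (i + 1)"] conjI allI impI ballI)
      fix W h assume dW: "\<forall>h\<in>{1..H}. dh A \<nu> P r H \<pi>s c TYPE('d) h (fw \<phi> (W h)) (fstar A P r H h) \<le> \<rho> h"
        and h: "h \<in> {1..H-1}"
      show "hnorm \<nu> P \<pi>s h (\<lambda>s a. Tstar A P r h (fw \<phi> (W (h + 1))) s a - Tstar A P r h (fstar A P r H (h + 1)) s a)
                  \<le> (1 + \<rho> (h + 1)) * hnorm \<nu> P \<pi>s (h + 1) (\<lambda>s a. fw \<phi> (W (h + 1)) s a - fstar A P r H (h + 1) s a)"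
        by (rule partb_lip[OF dW h])
    next
      fix h h' :: nat assume hh: "1 \<le> h \<and> h \<le> h' \<and> h' \<le> H"
      show "(\<Prod>i\<in>{h..<h'}. 1 + \<rho> (i + 1)) \<le> 3"
        using prod_bound[OF H2 conjunct1[OF rr] conjunct2[OF rr]] hh by blast
    qed
  qed
  show "\<forall>W \<pi>. (\<forall>h\<in>{1..H}. greedy_at S A (fw \<phi> (W h)) (\<pi> h)) \<longrightarrow>
        (\<forall>h h'. 1 \<le> h \<and> h \<le> h' \<and> h' \<le> H - 1 \<longrightarrow> (\<forall>v. hnorm \<nu> P \<pi>s h' (fw \<phi> v) > 0 \<longrightarrow>
           \<bar>\<integral>s. Pchain P \<pi>s h (h' - h) (fw \<phi> v) s (\<pi>s h s) - Pchain P \<pi>s h (h' - h) (fw \<phi> v) s (\<pi> h s)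
              \<partial>(mu \<nu> P \<pi>s h)\<bar> / hnorm \<nu> P \<pi>s h' (fw \<phi> v)
           \<le> sqrt (real CARD('d)) * cnorm \<nu> P \<pi>s h (c h)
              * hnorm \<nu> P \<pi>s h (\<lambda>s a. fw \<phi> (W h) s a - fstar A P r H h s a) / hnorm \<nu> P \<pi>s h (fstar A P r H h)))"
  proof (intro allI impI)
    fix W \<pi> h h' v
    assume gW: "\<forall>h\<in>{1..H}. greedy_at S A (fw \<phi> (W h)) (\<pi> h)" and hh: "1 \<le> h \<and> h \<le> h' \<and> h' \<le> H - 1"
      and pos: "hnorm \<nu> P \<pi>s h' (fw \<phi> v) > 0"
    show "\<bar>\<integral>s. Pchain P \<pi>s h (h' - h) (fw \<phi> v) s (\<pi>s h s) - Pchain P \<pi>s h (h' - h) (fw \<phi> v) s (\<pi> h s)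
              \<partial>(mu \<nu> P \<pi>s h)\<bar> / hnorm \<nu> P \<pi>s h' (fw \<phi> v)
           \<le> sqrt (real CARD('d)) * cnorm \<nu> P \<pi>s h (c h)
              * hnorm \<nu> P \<pi>s h (\<lambda>s a. fw \<phi> (W h) s a - fstar A P r H h s a) / hnorm \<nu> P \<pi>s h (fstar A P r H h)"
      using partc[OF gW _ _ _ pos] hh by blast
  qed
qed

end

theorem lemma1:
  fixes S :: "'s measure" and A :: "'a measure"
    and P :: "nat \<Rightarrow> 's \<Rightarrow> 'a \<Rightarrow> 's measure"
    and r :: "nat \<Rightarrow> 's \<Rightarrow> 'a \<Rightarrow> real"
    and \<nu> :: "'s measure" and H :: nat
    and \<phi> :: "'s \<Rightarrow> 'a \<Rightarrow> real^'d::finite"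
    and \<pi>s :: "nat \<Rightarrow> 's \<Rightarrow> 'a"
    and c :: "nat \<Rightarrow> 's \<Rightarrow> real"
    and \<rho> :: "nat \<Rightarrow> real"
  assumes H2: "H \<ge> 2"
    and nu_prob: "prob_space \<nu>" and nu_sets: "sets \<nu> = sets S"
    and kernel: "\<forall>h\<in>{1..<H}. (\<forall>s\<in>space S. \<forall>a\<in>space A. prob_space (P h s a) \<and> sets (P h s a) = sets S)
                    \<and> (\<lambda>(s, a). P h s a) \<in> S \<Otimes>\<^sub>M A \<rightarrow>\<^sub>M subprob_algebra S"
    and phi_meas: "(\<lambda>(s, a). \<phi> s a) \<in> borel_measurable (S \<Otimes>\<^sub>M A)"
    and phi_bound: "\<forall>s\<in>space S. \<forall>a\<in>space A. norm (\<phi> s a) \<le> 1"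
    and greedy_exists: "\<forall>w. \<exists>p. greedy_at S A (fw \<phi> w) p"
    and pistar_greedy: "\<forall>h\<in>{1..H}. greedy_at S A (fstar A P r H h) (\<pi>s h)"
    and fstar_in_F: "\<forall>h\<in>{1..H}. \<exists>w. \<forall>s\<in>space S. \<forall>a\<in>space A. fstar A P r H h s a = fw \<phi> w s a"
    and closure: "\<forall>W \<pi>. (\<forall>h\<in>{1..H}. greedy_at S A (fw \<phi> (W h)) (\<pi> h)) \<longrightarrow>
                    (\<forall>h\<in>{1..<H}. \<forall>v. \<exists>v'. \<forall>s\<in>space S. \<forall>a\<in>space A.
                        r h s a + Ppol P \<pi> h (fw \<phi> v) s a = fw \<phi> v' s a)"
    and Sigma_pd: "\<forall>h\<in>{1..H}. \<forall>x. x \<noteq> 0 \<longrightarrow> x \<bullet> (Sigma \<nu> P \<pi>s \<phi> h *v x) > 0"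
    and fstar_pos: "\<forall>h\<in>{1..H}. hnorm \<nu> P \<pi>s h (fstar A P r H h) > 0"
    and c_reg: "\<forall>h\<in>{1..H}. c h \<in> borel_measurable S \<and> (\<forall>s\<in>space S. c h s \<ge> 0)
                   \<and> integrable (mu \<nu> P \<pi>s h) (\<lambda>s. (c h s)\<^sup>2)"
    and curv: "\<forall>h\<in>{1..H}. \<forall>v p. greedy_at S A (fw \<phi> v) p \<longrightarrow> (\<forall>s\<in>space S.
        qnorm (matrix_inv (Sigma \<nu> P \<pi>s \<phi> h)) (\<phi> s (p s) - \<phi> s (\<pi>s h s))
          \<le> c h s * sqrt (real CARD('d)) * hnorm \<nu> P \<pi>s h (\<lambda>s a. fw \<phi> v s a - fstar A P r H h s a)
               / hnorm \<nu> P \<pi>s h (fstar A P r H h)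
      \<and> fw \<phi> v s (p s) - fw \<phi> v s (\<pi>s h s)
          \<le> c h s * sqrt (real CARD('d)) * hnorm \<nu> P \<pi>s h (fstar A P r H h)
             * (hnorm \<nu> P \<pi>s h (\<lambda>s a. fw \<phi> v s a - fstar A P r H h s a)
                  / hnorm \<nu> P \<pi>s h (fstar A P r H h))\<^sup>2)"
  shows
    \<comment> \<open>(a) pseudo-metric on F x F\<close>
    "(\<forall>h\<in>{1..H}. \<forall>v1 v2 v3.
        dh A \<nu> P r H \<pi>s c TYPE('d) h (fw \<phi> v1) (fw \<phi> v1) = 0
      \<and> dh A \<nu> P r H \<pi>s c TYPE('d) h (fw \<phi> v1) (fw \<phi> v2) \<ge> 0
      \<and> dh A \<nu> P r H \<pi>s c TYPE('d) h (fw \<phi> v1) (fw \<phi> v2) = dh A \<nu> P r H \<pi>s c TYPE('d) h (fw \<phi> v2) (fw \<phi> v1)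
      \<and> dh A \<nu> P r H \<pi>s c TYPE('d) h (fw \<phi> v1) (fw \<phi> v3)
          \<le> dh A \<nu> P r H \<pi>s c TYPE('d) h (fw \<phi> v1) (fw \<phi> v2) + dh A \<nu> P r H \<pi>s c TYPE('d) h (fw \<phi> v2) (fw \<phi> v3))
   \<comment> \<open>(a) transition-difference bound\<close>
   \<and> (\<forall>W \<pi>. (\<forall>h\<in>{1..H}. greedy_at S A (fw \<phi> (W h)) (\<pi> h)) \<longrightarrow>
        (\<forall>h\<in>{2..H}. \<forall>v. hnorm \<nu> P \<pi>s h (fw \<phi> v) > 0 \<longrightarrow>
           hnorm \<nu> P \<pi>s (h - 1) (\<lambda>s a. Ppol P \<pi> (h - 1) (fw \<phi> v) s a - Ppol P \<pi>s (h - 1) (fw \<phi> v) s a)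
             / hnorm \<nu> P \<pi>s h (fw \<phi> v)
           \<le> dh A \<nu> P r H \<pi>s c TYPE('d) h (fw \<phi> (W h)) (fstar A P r H h)))
   \<comment> \<open>(b)\<close>
   \<and> ((\<forall>h\<in>{1..H}. 0 < \<rho> h \<and> \<rho> h \<le> 1 / (2 * (real H - real h + 1)))
       \<and> (\<forall>h\<in>{2..H-1}. \<rho> h \<le> (1/2) * (1 / (real H - real h + 1)) * (1 / (1 + ln (real H))))
      \<longrightarrow> (\<exists>\<kappa>::nat \<Rightarrow> real.
            (\<forall>W. (\<forall>h\<in>{1..H}. dh A \<nu> P r H \<pi>s c TYPE('d) h (fw \<phi> (W h)) (fstar A P r H h) \<le> \<rho> h) \<longrightarrow>
               (\<forall>h\<in>{1..H-1}.
                  hnorm \<nu> P \<pi>s h (\<lambda>s a. Tstar A P r h (fw \<phi> (W (h + 1))) s a - Tstar A P r h (fstar A P r H (h + 1)) s a)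
                  \<le> \<kappa> h * hnorm \<nu> P \<pi>s (h + 1) (\<lambda>s a. fw \<phi> (W (h + 1)) s a - fstar A P r H (h + 1) s a)))
          \<and> (\<forall>h h'. 1 \<le> h \<and> h \<le> h' \<and> h' \<le> H \<longrightarrow> (\<Prod>i\<in>{h..<h'}. \<kappa> i) \<le> 3)))
   \<comment> \<open>(c)\<close>
   \<and> (\<forall>W \<pi>. (\<forall>h\<in>{1..H}. greedy_at S A (fw \<phi> (W h)) (\<pi> h)) \<longrightarrow>
        (\<forall>h h'. 1 \<le> h \<and> h \<le> h' \<and> h' \<le> H - 1 \<longrightarrow> (\<forall>v. hnorm \<nu> P \<pi>s h' (fw \<phi> v) > 0 \<longrightarrow>
           \<bar>\<integral>s. Pchain P \<pi>s h (h' - h) (fw \<phi> v) s (\<pi>s h s) - Pchain P \<pi>s h (h' - h) (fw \<phi> v) s (\<pi> h s)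
              \<partial>(mu \<nu> P \<pi>s h)\<bar> / hnorm \<nu> P \<pi>s h' (fw \<phi> v)
           \<le> sqrt (real CARD('d)) * cnorm \<nu> P \<pi>s h (c h)
              * hnorm \<nu> P \<pi>s h (\<lambda>s a. fw \<phi> (W h) s a - fstar A P r H h s a) / hnorm \<nu> P \<pi>s h (fstar A P r H h))))"
proof -
  interpret mdp S A P r \<nu> H \<phi> \<pi>s c \<rho>
    by (rule mdp.intro; fact)
  show ?thesis by (rule main)
qed

end
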